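(* Let $0<a<b$, let $X$ be a random variable with values in $[a,b]$, $\mu=\mathbb{E}X$, $\sigma^2=\mathrm{Var}[X]$, and let $R_n, C_n$ be the effective resistance and effective conductance of the random network $T_n$ defined in the context. There exist constants $M_1,M_2$ depending only on $a$ and $b$ such that for all integers $n\ge 2$, $$\left|\mathbb{E}R_n-\mu n+\frac{\sigma^2}{\mu}\ln n\right|\le M_1\quad\text{and}\quad\left|\mathbb{E}C_n-\frac{1}{\mu n}-\frac{\sigma^2\ln n}{\mu^3n^2}\right|\le\frac{M_2}{n^2}.$$
   Context: For $n\ge1$, $T_n$ is the edge-rooted tree consisting of a root vertex $r$ joined by a single edge to a vertex $v$, where $v$ is the root of a complete binary tree with $n-1$ levels (so $T_n$ has $2^{n-1}$ leaves at distance $n$ from $r$). The depth $d(e)$ of an edge $e$ is the number of edges on the path that starts with $e$ and ends at $r$; the edge at $r$ has depth $1$. Each edge $e$ is given resistance $r_e=2^{d(e)-1}X_e$, with the $X_e$ i.i.d. copies of $X$. $R_n$ is the effective resistance between $r$ and the set of leaves of $T_n$, and $C_n=1/R_n$ is the effective conductance. *)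

theory Defs
  imports "HOL-Probability.Probability"
begin

text \<open>Edges of T_n are labelled by binary words w (bool lists) of length < n:
  the root edge is [], and the two edges below edge w are w@[False], w@[True].
  The edge labelled w has depth length w + 1.\<close>

definition par :: "real \<Rightarrow> real \<Rightarrow> real" where
  "par x y = x * y / (x + y)"

text \<open>eff r k w: effective resistance between the top endpoint of edge w and the
  leaves of the subtree consisting of edge w and the k-1 binary levels below it,
  where edge u carries resistance r u (series/parallel reduction in the tree).\<close>
fun eff :: "(bool list \<Rightarrow> real) \<Rightarrow> nat \<Rightarrow> bool list \<Rightarrow> real" where
  "eff r 0 w = 0"
| "eff r (Suc k) w = r w + par (eff r k (w @ [False])) (eff r k (w @ [True]))"

text \<open>Edge resistances r_e = 2^(d(e)-1) X_e with d(e) = length w + 1.\<close>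
definition edge_res :: "(bool list \<Rightarrow> 'a \<Rightarrow> real) \<Rightarrow> 'a \<Rightarrow> bool list \<Rightarrow> real" where
  "edge_res X \<omega> w = 2 ^ length w * X w \<omega>"

definition Rn :: "(bool list \<Rightarrow> 'a \<Rightarrow> real) \<Rightarrow> nat \<Rightarrow> 'a \<Rightarrow> real" where
  "Rn X n \<omega> = eff (edge_res X \<omega>) n []"

definition Cn :: "(bool list \<Rightarrow> 'a \<Rightarrow> real) \<Rightarrow> nat \<Rightarrow> 'a \<Rightarrow> real" where
  "Cn X n \<omega> = 1 / Rn X n \<omega>"

end

theory Submission
  imports Defs "HOL-Analysis.Harmonic_Numbers"
begin

lemma par_scale: "0 < c \<Longrightarrow> par (c*x) (c*y) = c * par x y"
proof (cases "x+y=0")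
  case True then show ?thesis unfolding par_def by (simp add: distrib_left[symmetric])
next
  case False
  assume c: "0 < c"
  have "c*x*(c*y)/(c*x+c*y) = (c*(c*(x*y)))/(c*(x+y))" by (simp add: algebra_simps)
  also have "\<dots> = c*(x*y)/(x+y)" using c by simp
  finally show ?thesis unfolding par_def by simp
qed

lemma par_00[simp]: "par 0 0 = 0" by (simp add: par_def)

lemma measurable_par[measurable]:
  "f \<in> borel_measurable M \<Longrightarrow> g \<in> borel_measurable M \<Longrightarrow> (\<lambda>x. par (f x) (g x)) \<in> borel_measurable M"
  unfolding par_def by (intro borel_measurable_divide borel_measurable_times borel_measurable_add)

lemma par_bnd:
  assumes "0 \<le> lo" "lo \<le> y" "y \<le> hi" "lo \<le> z" "z \<le> hi"
  shows "lo \<le> par (2*y) (2*z) \<and> par (2*y) (2*z) \<le> hi"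
proof (cases "y + z = 0")
  case True
  then have "y = 0" "z = 0" using assms by auto
  then show ?thesis using assms by simp
next
  case False
  then have p: "y + z > 0" using assms by auto
  have e: "par (2*y) (2*z) = 2*y*z/(y+z)" unfolding par_def using p by (simp add: field_simps)
  have "lo*(y+z) \<le> 2*y*z"
  proof -
    have "0 \<le> y*(z-lo) + z*(y-lo)" using assms by (intro add_nonneg_nonneg mult_nonneg_nonneg) auto
    then show ?thesis by (simp add: algebra_simps)
  qed
  moreover have "2*y*z \<le> hi*(y+z)"
  proof -
    have "0 \<le> y*(hi-z) + z*(hi-y)" using assms by (intro add_nonneg_nonneg mult_nonneg_nonneg) auto
    then show ?thesis by (simp add: algebra_simps)
  qed
  ultimately show ?thesis unfolding e using p by (simp add: field_simps)
qed

definition Rs :: "(bool list \<Rightarrow> 'a \<Rightarrow> real) \<Rightarrow> nat \<Rightarrow> bool list \<Rightarrow> 'a \<Rightarrow> real" where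
  "Rs X k w \<omega> = eff (edge_res X \<omega>) k w / 2 ^ length w"

lemma Rs_0[simp]: "Rs X 0 w \<omega> = 0" by (simp add: Rs_def)

lemma eff_Rs: "eff (edge_res X \<omega>) k w = 2 ^ length w * Rs X k w \<omega>"
  by (simp add: Rs_def)

lemma Rs_Suc: "Rs X (Suc k) w \<omega> = X w \<omega> + par (2 * Rs X k (w@[False]) \<omega>) (2 * Rs X k (w@[True]) \<omega>)"
proof -
  have "eff (edge_res X \<omega>) (Suc k) w = 2 ^ length w * X w \<omega> +
     par (2 ^ length w * (2 * Rs X k (w@[False]) \<omega>)) (2 ^ length w * (2 * Rs X k (w@[True]) \<omega>))"
    by (simp add: eff_Rs edge_res_def ac_simps)
  also have "\<dots> = 2 ^ length w * (X w \<omega> + par (2 * Rs X k (w@[False]) \<omega>) (2 * Rs X k (w@[True]) \<omega>))"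
    by (simp add: par_scale algebra_simps)
  finally show ?thesis by (simp add: Rs_def)
qed

lemma Rn_Rs: "Rn X n \<omega> = Rs X n [] \<omega>" by (simp add: Rn_def Rs_def)

lemma Rs_1: "Rs X (Suc 0) w \<omega> = X w \<omega>" by (simp add: Rs_Suc)

lemma Rs_bnd:
  assumes "\<And>u. a \<le> X u \<omega> \<and> X u \<omega> \<le> b" "0 \<le> a"
  shows "a * real k \<le> Rs X k w \<omega> \<and> Rs X k w \<omega> \<le> b * real k"
proof (induction k arbitrary: w)
  case 0 then show ?case by simp
next
  case (Suc k)
  have "0 \<le> a * real k" using assms by simp
  from par_bnd[OF this, of "Rs X k (w@[False]) \<omega>" "b * real k" "Rs X k (w@[True]) \<omega>"] Suc.IH
  have "a * real k \<le> par (2 * Rs X k (w@[False]) \<omega>) (2 * Rs X k (w@[True]) \<omega>) \<and>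
        par (2 * Rs X k (w@[False]) \<omega>) (2 * Rs X k (w@[True]) \<omega>) \<le> b * real k" by blast
  then show ?case using assms(1)[of w] by (simp add: Rs_Suc algebra_simps)
qed

definition sub :: "bool list \<Rightarrow> bool list set" where "sub w = {u. \<exists>t. u = w @ t}"

lemma sub_self[simp]: "w \<in> sub w" unfolding sub_def by (metis (mono_tags) append_Nil2 mem_Collect_eq)
lemma sub_child: "sub (w@[c]) \<subseteq> sub w" unfolding sub_def by auto

lemma eff_cong: "(\<And>u. u \<in> sub w \<Longrightarrow> r u = r' u) \<Longrightarrow> eff r k w = eff r' k w"
proof (induction k arbitrary: w)
  case 0 then show ?case by simp
next
  case (Suc k)
  have "eff r k (w@[c]) = eff r' k (w@[c])" for c
    using Suc.IH[of "w@[c]"] Suc.prems sub_child by blast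
  then show ?case using Suc.prems by simp
qed

lemma meas_eff:
  "sub w \<subseteq> S \<Longrightarrow> (\<lambda>f. eff (\<lambda>u. 2 ^ length u * f u) k w) \<in> borel_measurable (PiM S (\<lambda>_. borel))"
proof (induction k arbitrary: w)
  case 0 then show ?case by simp
next
  case (Suc k)
  have w: "w \<in> S" using Suc.prems by auto
  have m1: "(\<lambda>f. eff (\<lambda>u. 2 ^ length u * f u) k (w@[c])) \<in> borel_measurable (PiM S (\<lambda>_. borel))" for c
    using Suc.IH Suc.prems sub_child by blast
  have m2: "(\<lambda>f. f w) \<in> borel_measurable (PiM S (\<lambda>_. borel))" 
    using w by (rule measurable_component_singleton)
  note [measurable] = m1[of False] m1[of True] m2
  show ?case by simp measurable
qed

lemma Rs_restrict:
  assumes "sub w \<subseteq> S"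
  shows "Rs X k w \<omega> = eff (\<lambda>u. 2 ^ length u * (restrict (\<lambda>i. X i \<omega>) S) u) k w / 2 ^ length w"
  unfolding Rs_def edge_res_def using assms by (intro arg_cong2[where f="(/)"] eff_cong refl) auto

lemma (in prob_space) meas_Rs:
  assumes "\<And>u. X u \<in> borel_measurable M"
  shows "Rs X k w \<in> borel_measurable M"
proof (induction k arbitrary: w)
  case 0 then show ?case by simp
next
  case (Suc k)
  have e: "Rs X (Suc k) w = (\<lambda>\<omega>. X w \<omega> + par (2 * Rs X k (w@[False]) \<omega>) (2 * Rs X k (w@[True]) \<omega>))"
    by (rule ext) (simp add: Rs_Suc)
  show ?case unfolding e using Suc.IH assms by measurable
qed

lemma sub_disj: "w \<notin> sub (w@[c])" "sub (w@[False]) \<inter> sub (w@[True]) = {}"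
  unfolding sub_def by auto

lemma (in prob_space) indep_level1:
  fixes X :: "bool list \<Rightarrow> 'a \<Rightarrow> real"
  assumes ind: "indep_vars (\<lambda>_. borel) X UNIV" and phi: "\<phi> \<in> borel_measurable (borel \<Otimes>\<^sub>M borel)"
  shows "indep_var borel (X w) borel (\<lambda>\<omega>. \<phi> (Rs X k (w@[False]) \<omega>, Rs X k (w@[True]) \<omega>))"
proof -
  let ?B = "sub (w@[False]) \<union> sub (w@[True])"
  have i1: "indep_var (PiM {w} (\<lambda>_. borel)) (\<lambda>\<omega>. restrict (\<lambda>i. X i \<omega>) {w})
      (PiM ?B (\<lambda>_. borel)) (\<lambda>\<omega>. restrict (\<lambda>i. X i \<omega>) ?B)"
    by (rule indep_var_restrict[OF ind]) (use sub_disj in auto)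
  have mA: "(\<lambda>f. f w) \<in> measurable (PiM {w} (\<lambda>_. borel)) borel"
    by (rule measurable_component_singleton) simp
  have mF: "(\<lambda>f. eff (\<lambda>u. 2 ^ length u * f u) k (w@[c])) \<in> borel_measurable (PiM S (\<lambda>_. borel))"
    if "sub (w@[c]) \<subseteq> S" for c S using meas_eff[OF that] .
  note [measurable] = mF[of False ?B] mF[of True ?B] phi
  have mB: "(\<lambda>f. \<phi> (eff (\<lambda>u. 2 ^ length u * f u) k (w@[False]) / 2 ^ length (w@[False]),
                 eff (\<lambda>u. 2 ^ length u * f u) k (w@[True]) / 2 ^ length (w@[True])))
       \<in> measurable (PiM ?B (\<lambda>_. borel)) borel"
    by measurable
  have "indep_var borel ((\<lambda>f. f w) \<circ> (\<lambda>\<omega>. restrict (\<lambda>i. X i \<omega>) {w})) borel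
     ((\<lambda>f. \<phi> (eff (\<lambda>u. 2 ^ length u * f u) k (w@[False]) / 2 ^ length (w@[False]),
                 eff (\<lambda>u. 2 ^ length u * f u) k (w@[True]) / 2 ^ length (w@[True]))) \<circ>
      (\<lambda>\<omega>. restrict (\<lambda>i. X i \<omega>) ?B))"
    by (rule indep_var_compose[OF i1 mA mB])
  also have "((\<lambda>f. f w) \<circ> (\<lambda>\<omega>. restrict (\<lambda>i. X i \<omega>) {w})) = X w" by (auto simp: fun_eq_iff)
  also have "((\<lambda>f. \<phi> (eff (\<lambda>u. 2 ^ length u * f u) k (w@[False]) / 2 ^ length (w@[False]),
                 eff (\<lambda>u. 2 ^ length u * f u) k (w@[True]) / 2 ^ length (w@[True]))) \<circ>
      (\<lambda>\<omega>. restrict (\<lambda>i. X i \<omega>) ?B)) = (\<lambda>\<omega>. \<phi> (Rs X k (w@[False]) \<omega>, Rs X k (w@[True]) \<omega>))"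
  proof -
    have s1: "sub (w@[False]) \<subseteq> ?B" and s2: "sub (w@[True]) \<subseteq> ?B" by auto
    show ?thesis by (rule ext) (simp only: comp_apply Rs_restrict[OF s1, symmetric] Rs_restrict[OF s2, symmetric])
  qed
  finally show ?thesis .
qed

lemma (in prob_space) indep_level2:
  fixes X :: "bool list \<Rightarrow> 'a \<Rightarrow> real"
  assumes ind: "indep_vars (\<lambda>_. borel) X UNIV"
  shows "indep_var borel (Rs X k (w@[False])) borel (Rs X k (w@[True]))"
proof -
  have mF: "(\<lambda>f. eff (\<lambda>u. 2 ^ length u * f u) k (w@[c])) \<in> borel_measurable (PiM S (\<lambda>_. borel))"
    if "sub (w@[c]) \<subseteq> S" for c S using meas_eff[OF that] .
  have i2: "indep_var (PiM (sub (w@[False])) (\<lambda>_. borel)) (\<lambda>\<omega>. restrict (\<lambda>i. X i \<omega>) (sub (w@[False])))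
      (PiM (sub (w@[True])) (\<lambda>_. borel)) (\<lambda>\<omega>. restrict (\<lambda>i. X i \<omega>) (sub (w@[True])))"
    by (rule indep_var_restrict[OF ind]) (use sub_disj in auto)
  have mC: "(\<lambda>f. eff (\<lambda>u. 2 ^ length u * f u) k (w@[c]) / 2 ^ length (w@[c])) \<in> borel_measurable (PiM (sub (w@[c])) (\<lambda>_. borel))" for c
    using mF[of c "sub (w@[c])"] by simp
  have "indep_var borel ((\<lambda>f. eff (\<lambda>u. 2 ^ length u * f u) k (w@[False]) / 2 ^ length (w@[False])) \<circ> (\<lambda>\<omega>. restrict (\<lambda>i. X i \<omega>) (sub (w@[False]))))
     borel ((\<lambda>f. eff (\<lambda>u. 2 ^ length u * f u) k (w@[True]) / 2 ^ length (w@[True])) \<circ> (\<lambda>\<omega>. restrict (\<lambda>i. X i \<omega>) (sub (w@[True]))))"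
    by (rule indep_var_compose[OF i2 mC mC])
  also have "((\<lambda>f. eff (\<lambda>u. 2 ^ length u * f u) k (w@[False]) / 2 ^ length (w@[False])) \<circ> (\<lambda>\<omega>. restrict (\<lambda>i. X i \<omega>) (sub (w@[False])))) = Rs X k (w@[False])"
    by (rule ext) (simp only: comp_apply Rs_restrict[OF order_refl, symmetric])
  also have "((\<lambda>f. eff (\<lambda>u. 2 ^ length u * f u) k (w@[True]) / 2 ^ length (w@[True])) \<circ> (\<lambda>\<omega>. restrict (\<lambda>i. X i \<omega>) (sub (w@[True])))) = Rs X k (w@[True])"
    by (rule ext) (simp only: comp_apply Rs_restrict[OF order_refl, symmetric])
  finally show ?thesis .
qed

lemma (in prob_space) indep_level3:
  fixes X :: "bool list \<Rightarrow> 'a \<Rightarrow> real"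
  assumes ind: "indep_vars (\<lambda>_. borel) X UNIV"
  shows "indep_vars (\<lambda>_. borel) (\<lambda>i. [X w, Rs X k (w@[False]), Rs X k (w@[True])] ! i) {0,1,2::nat}"
proof -
  let ?K = "\<lambda>i::nat. [{w}, sub (w@[False]), sub (w@[True])] ! i"
  have disj: "disjoint_family_on ?K {0,1,2}"
    unfolding disjoint_family_on_def using sub_disj by auto
  have i3: "indep_vars (\<lambda>j. PiM (?K j) (\<lambda>_. borel)) (\<lambda>j \<omega>. restrict (\<lambda>i. X i \<omega>) (?K j)) {0,1,2}"
    by (rule indep_vars_restrict[OF ind _ disj]) auto
  have mF: "(\<lambda>f. eff (\<lambda>u. 2 ^ length u * f u) k (w@[c])) \<in> borel_measurable (PiM S (\<lambda>_. borel))"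
    if "sub (w@[c]) \<subseteq> S" for c S using meas_eff[OF that] .
  let ?Y = "\<lambda>i::nat. [\<lambda>f. f w, \<lambda>f. eff (\<lambda>u. 2 ^ length u * f u) k (w@[False]) / 2 ^ length (w@[False]),
     \<lambda>f. eff (\<lambda>u. 2 ^ length u * f u) k (w@[True]) / 2 ^ length (w@[True])] ! i"
  have mY: "?Y i \<in> measurable (PiM (?K i) (\<lambda>_. borel)) borel" if "i \<in> {0,1,2}" for i
  proof -
    have "i = 0 \<or> i = 1 \<or> i = 2" using that by auto
    moreover have "(\<lambda>f. f w) \<in> measurable (PiM {w} (\<lambda>_. borel)) borel"
      by (rule measurable_component_singleton) simp
    ultimately show ?thesis using mF[of False "sub (w@[False])"] mF[of True "sub (w@[True])"] by auto
  qed
  have "indep_vars (\<lambda>_. borel) (\<lambda>i \<omega>. ?Y i (restrict (\<lambda>i. X i \<omega>) (?K i))) {0,1,2}"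
    by (rule indep_vars_compose2[OF i3 mY])
  then show ?thesis
  proof (rule indep_vars_cong[THEN iffD1, rotated 3])
    fix i assume "i \<in> {0::nat,1,2}"
    then have "i = 0 \<or> i = 1 \<or> i = 2" by auto
    then show "(\<lambda>\<omega>. ?Y i (restrict (\<lambda>i. X i \<omega>) (?K i))) = [X w, Rs X k (w@[False]), Rs X k (w@[True])] ! i"
    proof (elim disjE)
      assume "i = 0" then show ?thesis by (auto simp: fun_eq_iff)
    next
      assume "i = 1" then show ?thesis
        by (simp only: nth_Cons_0 nth_Cons_Suc One_nat_def numeral_2_eq_2 Rs_restrict[OF order_refl, symmetric])
    next
      assume "i = 2" then show ?thesis
        by (simp only: nth_Cons_0 nth_Cons_Suc One_nat_def numeral_2_eq_2 Rs_restrict[OF order_refl, symmetric])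
    qed
  qed auto
qed

lemma (in prob_space) law_Rs_aux:
  fixes X :: "bool list \<Rightarrow> 'a \<Rightarrow> real"
  assumes ind: "indep_vars (\<lambda>_. borel) X UNIV"
    and iid: "\<And>w. distr M borel (X w) = distr M borel (X [])"
  shows "distr M borel (Rs X k w) = distr M borel (Rs X k w')"
proof (induction k arbitrary: w w')
  case 0 then show ?case by simp
next
  case (Suc k)
  have mX[measurable]: "X u \<in> borel_measurable M" for u
    using ind unfolding indep_vars_def by auto
  have mR[measurable]: "Rs X k u \<in> borel_measurable M" for u
    by (rule meas_Rs) simp
  let ?I = "{0,1,2::nat}"
  let ?Z = "\<lambda>w i. [X w, Rs X k (w@[False]), Rs X k (w@[True])] ! i"
  let ?F = "\<lambda>f::nat\<Rightarrow>real. f 0 + par (2 * f 1) (2 * f 2)"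
  have mF: "?F \<in> borel_measurable (PiM ?I (\<lambda>_. borel))" by measurable
  have rvZ: "random_variable borel (?Z w i)" if "i \<in> ?I" for w i
  proof -
    have "i = 0 \<or> i = 1 \<or> i = 2" using that by auto
    then show ?thesis by (auto simp: numeral_2_eq_2)
  qed
  have mT: "(\<lambda>\<omega>. \<lambda>i\<in>?I. ?Z w i \<omega>) \<in> measurable M (PiM ?I (\<lambda>_. borel))" for w
    using rvZ by (intro measurable_restrict) auto
  have key: "distr M borel (Rs X (Suc k) w) = distr (PiM ?I (\<lambda>i. distr M borel (?Z w i))) borel ?F" for w
  proof -
    have "Rs X (Suc k) w = ?F \<circ> (\<lambda>\<omega>. \<lambda>i\<in>?I. ?Z w i \<omega>)"
      by (auto simp: fun_eq_iff Rs_Suc)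
    then have "distr M borel (Rs X (Suc k) w) = distr (distr M (PiM ?I (\<lambda>_. borel)) (\<lambda>\<omega>. \<lambda>i\<in>?I. ?Z w i \<omega>)) borel ?F"
      using distr_distr[OF mF mT] by simp
    also have "distr M (PiM ?I (\<lambda>_. borel)) (\<lambda>\<omega>. \<lambda>i\<in>?I. ?Z w i \<omega>) = PiM ?I (\<lambda>i. distr M borel (?Z w i))"
      using indep_vars_iff_distr_eq_PiM'[where I="?I" and M'="\<lambda>_. borel" and X="?Z w"] rvZ indep_level3[OF ind, of w k] by simp
    finally show ?thesis .
  qed
  have "PiM ?I (\<lambda>i. distr M borel (?Z w i)) = PiM ?I (\<lambda>i. distr M borel (?Z w' i))"
  proof (rule PiM_cong)
    fix i assume "i \<in> ?I"
    then have "i = 0 \<or> i = 1 \<or> i = 2" by auto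
    then show "distr M borel (?Z w i) = distr M borel (?Z w' i)"
      using Suc.IH iid[of w] iid[of w'] by (auto simp: numeral_2_eq_2)
  qed simp
  then show ?case using key[of w] key[of w'] by simp
qed

lemma par_inv: "0 < y \<Longrightarrow> 0 < z \<Longrightarrow> par (2*y) (2*z) = 2 / (1/y + 1/z)"
  unfolding par_def by (simp add: field_simps)

lemma Qpt:
  fixes x y z c b :: real
  assumes x: "0 \<le> x" "x \<le> b" and y: "0 < y" and z: "0 < z" and c: "0 < c"
  defines "u \<equiv> 1/y + 1/z - 2*c" and "p \<equiv> 2*x*c + 2"
  defines "T \<equiv> 1/(x + par (2*y) (2*z)) - 2*c/p"
  shows "\<bar>T\<bar> \<le> \<bar>u\<bar>/2" and "\<bar>T - 2*u/p^2\<bar> \<le> b*u^2/4"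
proof -
  define S where "S = 1/y + 1/z"
  have S: "0 < S" using y z by (simp add: S_def add_pos_pos)
  have p: "2 \<le> p" using x c by (simp add: p_def)
  have q: "2 \<le> x*S + 2" using x S by simp
  have pi: "par (2*y) (2*z) = 2/S" using par_inv[OF y z] by (simp add: S_def)
  have inv: "1/(x + par (2*y) (2*z)) = S/(x*S+2)"
    unfolding pi using S q by (simp add: field_simps)
  have uS: "u = S - 2*c" by (simp add: u_def S_def)
  have T: "T = 2*u/((x*S+2)*p)"
  proof -
    have "0 < 2*x*c+2" using mult_nonneg_nonneg[of x c] x c by linarith
    moreover have "x*S+2 \<noteq> 0" "S*x+2 \<noteq> 0" using q by (auto simp: mult.commute)
    ultimately show ?thesis unfolding T_def inv uS p_def using S c x q by (simp add: field_simps)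
  qed
  have "\<bar>T\<bar> = 2*\<bar>u\<bar>/((x*S+2)*p)" using T p q by (simp add: abs_divide abs_mult)
  also have "\<dots> \<le> 2*\<bar>u\<bar>/(2*2)" using p q by (intro divide_left_mono mult_mono) auto
  finally show "\<bar>T\<bar> \<le> \<bar>u\<bar>/2" by simp
  have gen: "2*u/(Q*P) - 2*u/P^2 = 2*u*(P-Q)/(Q*P^2)" if "Q \<noteq> 0" "P \<noteq> 0" for P Q :: real
    using that by (simp add: field_simps power2_eq_square)
  have pq: "p - (x*S+2) = - x*u" by (simp add: p_def uS algebra_simps)
  have "T - 2*u/p^2 = 2*u*(p-(x*S+2))/((x*S+2)*p^2)" unfolding T using p q by (intro gen) auto
  also have "\<dots> = - (2*x*u^2)/((x*S+2)*p^2)" unfolding pq by (simp add: power2_eq_square)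
  finally have "T - 2*u/p^2 = - (2*x*u^2)/((x*S+2)*p^2)" .
  then have "\<bar>T - 2*u/p^2\<bar> = 2*x*u^2/((x*S+2)*p^2)" using p q x by (simp add: abs_divide abs_mult)
  also have "\<dots> \<le> 2*b*u^2/((x*S+2)*p^2)" using p q x by (intro divide_right_mono mult_right_mono) auto
  also have "\<dots> \<le> 2*b*u^2/(2*2^2)" using p q x by (intro divide_left_mono mult_mono power_mono) auto
  finally show "\<bar>T - 2*u/p^2\<bar> \<le> b*u^2/4" by simp
qed

lemma g0pt:
  fixes x c a b :: real
  assumes "a \<le> x" "x \<le> b" "0 < a" "0 < c"
  shows "0 \<le> 2*c/(2*x*c+2) - 2*c/(2*b*c+2)" and "2*c/(2*x*c+2) - 2*c/(2*b*c+2) \<le> (b-a)*c^2"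
proof -
  have p: "2 \<le> 2*x*c+2" "2 \<le> 2*b*c+2" using assms by auto
  have p3: "0 < 2*x*c+2" "0 < 2*b*c+2" using p by linarith+
  have pp: "0 < (2*b*c+2)*(2*x*c+2)" using p3 by (intro mult_pos_pos)
  have gen: "2*c/P - 2*c/Q = 2*c*(Q-P)/(P*Q)" if "Q \<noteq> 0" "P \<noteq> 0" for P Q :: real
    using that by (simp add: field_simps)
  have e: "2*c/(2*x*c+2) - 2*c/(2*b*c+2) = 4*c^2*(b-x)/((2*x*c+2)*(2*b*c+2))"
    using gen[of "2*b*c+2" "2*x*c+2"] p3 by (simp add: algebra_simps power2_eq_square)
  show "0 \<le> 2*c/(2*x*c+2) - 2*c/(2*b*c+2)" unfolding e using p assms by simp
  have "4*c^2*(b-x)/((2*x*c+2)*(2*b*c+2)) \<le> 4*c^2*(b-a)/((2*x*c+2)*(2*b*c+2))"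
    using p assms by (intro divide_right_mono mult_left_mono) auto
  also have "\<dots> \<le> 4*c^2*(b-a)/(2*2)" using p pp assms by (intro divide_left_mono mult_mono) auto
  finally show "2*c/(2*x*c+2) - 2*c/(2*b*c+2) \<le> (b-a)*c^2" unfolding e by (simp add: mult.commute)
qed

lemma sq_ineq: "(x+y)^2 \<le> (9/8)*x^2 + 9*(y::real)^2"
proof -
  have "0 \<le> (x - 8*y)^2" by simp
  then show ?thesis by (simp add: power2_eq_square algebra_simps)
qed

lemma four_ineq: "(x+y)^4 \<le> (729/512)*x^4 + 729*(y::real)^4"
proof -
  have "(x+y)^4 = ((x+y)^2)^2" by simp
  also have "\<dots> \<le> ((9/8)*x^2 + 9*y^2)^2" using sq_ineq[of x y] by (intro power_mono) auto
  also have "\<dots> \<le> (9/8)*((9/8)*x^2)^2 + 9*(9*y^2)^2" by (rule sq_ineq)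
  also have "\<dots> = (729/512)*x^4 + 729*y^4" by (simp add: field_simps eval_nat_numeral)
  finally show ?thesis .
qed

lemma sq_ineq2: "(x+y)^2 \<le> (3/2)*x^2 + 3*(y::real)^2"
proof -
  have "0 \<le> (x - 2*y)^2" by simp
  then show ?thesis by (simp add: power2_eq_square algebra_simps)
qed

lemma (in prob_space) intb:
  fixes h :: "'a \<Rightarrow> real"
  assumes "h \<in> borel_measurable M" "\<And>\<omega>. \<omega> \<in> space M \<Longrightarrow> \<bar>h \<omega>\<bar> \<le> B"
  shows "integrable M h"
  using assms by (intro integrable_const_bound[where B=B]) auto

lemma (in prob_space) intc:
  fixes f :: "real \<Rightarrow> real \<Rightarrow> real \<Rightarrow> real" and Y0 Y1 Y2 :: "'a \<Rightarrow> real"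
  assumes "(\<lambda>\<omega>. f (Y0 \<omega>) (Y1 \<omega>) (Y2 \<omega>)) \<in> borel_measurable M"
    and "continuous_on ({a0..b0} \<times> {a1..b1} \<times> {a2..b2}) (\<lambda>p. f (fst p) (fst (snd p)) (snd (snd p)))"
    and "\<And>\<omega>. \<omega> \<in> space M \<Longrightarrow> Y0 \<omega> \<in> {a0..b0} \<and> Y1 \<omega> \<in> {a1..b1} \<and> Y2 \<omega> \<in> {a2..b2}"
  shows "integrable M (\<lambda>\<omega>. f (Y0 \<omega>) (Y1 \<omega>) (Y2 \<omega>))"
proof -
  let ?K = "{a0..b0} \<times> {a1..b1} \<times> {a2..b2}"
  let ?g = "\<lambda>p. f (fst p) (fst (snd p)) (snd (snd p))"
  have "compact ?K" by (intro compact_Times compact_Icc)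
  then have "compact (?g ` ?K)"
    using assms(2) by (rule compact_continuous_image[rotated])
  then have "bounded (?g ` ?K)" by (rule compact_imp_bounded)
  then obtain B where B: "\<forall>x\<in>?g ` ?K. norm x \<le> B"
    unfolding bounded_iff by blast
  show ?thesis
  proof (rule intb[OF assms(1)])
    fix \<omega> assume "\<omega> \<in> space M"
    then have "(Y0 \<omega>, Y1 \<omega>, Y2 \<omega>) \<in> ?K" using assms(3) by simp
    then have "?g (Y0 \<omega>, Y1 \<omega>, Y2 \<omega>) \<in> ?g ` ?K" by (rule imageI)
    then have "norm (?g (Y0 \<omega>, Y1 \<omega>, Y2 \<omega>)) \<le> B" using B by blast
    then show "\<bar>f (Y0 \<omega>) (Y1 \<omega>) (Y2 \<omega>)\<bar> \<le> B" by simp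
  qed
qed

locale lev = prob_space +
  fixes Y0 Y1 Y2 :: "'a \<Rightarrow> real" and a b :: real and k :: nat
  assumes m0[measurable]: "Y0 \<in> borel_measurable M"
    and m1[measurable]: "Y1 \<in> borel_measurable M"
    and m2[measurable]: "Y2 \<in> borel_measurable M"
    and ind1: "\<And>\<phi>. \<phi> \<in> borel_measurable (borel \<Otimes>\<^sub>M borel) \<Longrightarrow> indep_var borel Y0 borel (\<lambda>\<omega>. \<phi> (Y1 \<omega>, Y2 \<omega>))"
    and ind2: "indep_var borel Y1 borel Y2"
    and law: "distr M borel Y1 = distr M borel Y2"
    and ab: "0 < a" "a \<le> b" and k1: "1 \<le> k"
    and b0: "\<And>\<omega>. \<omega> \<in> space M \<Longrightarrow> a \<le> Y0 \<omega> \<and> Y0 \<omega> \<le> b"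
    and b1: "\<And>\<omega>. \<omega> \<in> space M \<Longrightarrow> a * k \<le> Y1 \<omega> \<and> Y1 \<omega> \<le> b * k"
    and b2: "\<And>\<omega>. \<omega> \<in> space M \<Longrightarrow> a * k \<le> Y2 \<omega> \<and> Y2 \<omega> \<le> b * k"
begin

lemma box: "\<omega> \<in> space M \<Longrightarrow> Y0 \<omega> \<in> {a..b} \<and> Y1 \<omega> \<in> {a*k..b*k} \<and> Y2 \<omega> \<in> {a*k..b*k}"
  using b0 b1 b2 by auto

lemma akpos: "0 < a * k" using ab k1 by simp

lemma int3:
  fixes f :: "real \<Rightarrow> real \<Rightarrow> real \<Rightarrow> real"
  assumes "(\<lambda>\<omega>. f (Y0 \<omega>) (Y1 \<omega>) (Y2 \<omega>)) \<in> borel_measurable M"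
    and "continuous_on ({a..b} \<times> {a*k..b*k} \<times> {a*k..b*k}) (\<lambda>p. f (fst p) (fst (snd p)) (snd (snd p)))"
  shows "integrable M (\<lambda>\<omega>. f (Y0 \<omega>) (Y1 \<omega>) (Y2 \<omega>))"
  by (rule intc[OF assms box])

lemma EL: "(f :: real \<Rightarrow> real) \<in> borel_measurable borel \<Longrightarrow> (\<integral>\<omega>. f (Y2 \<omega>) \<partial>M) = (\<integral>\<omega>. f (Y1 \<omega>) \<partial>M)"
  using integral_distr[OF m1, of f] integral_distr[OF m2, of f] law by simp

lemma E12:
  fixes f g :: "real \<Rightarrow> real"
  assumes [measurable]: "f \<in> borel_measurable borel" "g \<in> borel_measurable borel"
    and "integrable M (\<lambda>\<omega>. f (Y1 \<omega>))" "integrable M (\<lambda>\<omega>. g (Y2 \<omega>))"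
  shows "(\<integral>\<omega>. f (Y1 \<omega>) * g (Y2 \<omega>) \<partial>M) = (\<integral>\<omega>. f (Y1 \<omega>) \<partial>M) * (\<integral>\<omega>. g (Y2 \<omega>) \<partial>M)"
proof -
  have "indep_var borel (f \<circ> Y1) borel (g \<circ> Y2)" by (rule indep_var_compose[OF ind2]) auto
  then show ?thesis using indep_var_lebesgue_integral[of "f \<circ> Y1" "g \<circ> Y2"] assms(3,4) by (simp add: comp_def)
qed

lemma E0:
  fixes f :: "real \<Rightarrow> real" and \<phi> :: "real \<times> real \<Rightarrow> real"
  assumes [measurable]: "f \<in> borel_measurable borel" "\<phi> \<in> borel_measurable (borel \<Otimes>\<^sub>M borel)"
    and "integrable M (\<lambda>\<omega>. f (Y0 \<omega>))" "integrable M (\<lambda>\<omega>. \<phi> (Y1 \<omega>, Y2 \<omega>))"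
  shows "(\<integral>\<omega>. f (Y0 \<omega>) * \<phi> (Y1 \<omega>, Y2 \<omega>) \<partial>M) = (\<integral>\<omega>. f (Y0 \<omega>) \<partial>M) * (\<integral>\<omega>. \<phi> (Y1 \<omega>, Y2 \<omega>) \<partial>M)"
proof -
  have "indep_var borel (f \<circ> Y0) borel (id \<circ> (\<lambda>\<omega>. \<phi> (Y1 \<omega>, Y2 \<omega>)))" by (rule indep_var_compose[OF ind1]) auto
  then show ?thesis using indep_var_lebesgue_integral[of "f \<circ> Y0" "(\<lambda>\<omega>. \<phi> (Y1 \<omega>, Y2 \<omega>))"] assms(3,4) by (simp add: comp_def)
qed

definition bnd :: "('a \<Rightarrow> real) \<Rightarrow> bool" where
  "bnd h \<longleftrightarrow> h \<in> borel_measurable M \<and> (\<exists>B. \<forall>\<omega>\<in>space M. \<bar>h \<omega>\<bar> \<le> B)"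

lemma bnd_int[simp]: "bnd h \<Longrightarrow> integrable M h"
  unfolding bnd_def using intb by blast

lemma bnd_meas: "bnd h \<Longrightarrow> h \<in> borel_measurable M" unfolding bnd_def by blast

lemma bndI: "h \<in> borel_measurable M \<Longrightarrow> (\<And>\<omega>. \<omega> \<in> space M \<Longrightarrow> \<bar>h \<omega>\<bar> \<le> B) \<Longrightarrow> bnd h"
  unfolding bnd_def by blast

lemma bnd_const[simp]: "bnd (\<lambda>\<omega>. c)" by (rule bndI[where B="\<bar>c\<bar>"]) auto

lemma bnd_Y0[simp]: "bnd Y0" using b0 ab by (intro bndI[where B=b]) force+
lemma bnd_Y1[simp]: "bnd Y1" using b1 akpos by (intro bndI[where B="b*k"]) force+
lemma bnd_Y2[simp]: "bnd Y2" using b2 akpos by (intro bndI[where B="b*k"]) force+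

lemma bnd_add[simp]: "bnd f \<Longrightarrow> bnd g \<Longrightarrow> bnd (\<lambda>\<omega>. f \<omega> + g \<omega>)"
  unfolding bnd_def by (auto intro!: exI[where x="_ + _"] abs_triangle_ineq[THEN order_trans] add_mono)
lemma bnd_diff[simp]: "bnd f \<Longrightarrow> bnd g \<Longrightarrow> bnd (\<lambda>\<omega>. f \<omega> - g \<omega>)"
  unfolding bnd_def by (auto intro!: exI[where x="_ + _"] abs_triangle_ineq4[THEN order_trans] add_mono)
lemma bnd_mult[simp]: "bnd f \<Longrightarrow> bnd g \<Longrightarrow> bnd (\<lambda>\<omega>. f \<omega> * g \<omega>)"
proof -
  assume "bnd f" "bnd g"
  then obtain B C where B: "\<forall>\<omega>\<in>space M. \<bar>f \<omega>\<bar> \<le> B" and C: "\<forall>\<omega>\<in>space M. \<bar>g \<omega>\<bar> \<le> C"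
    and [measurable]: "f \<in> borel_measurable M" "g \<in> borel_measurable M" unfolding bnd_def by blast
  show ?thesis
  proof (rule bndI[where B="B*C"])
    fix \<omega> assume "\<omega> \<in> space M"
    then show "\<bar>f \<omega> * g \<omega>\<bar> \<le> B * C" using B C by (auto simp: abs_mult intro!: mult_mono)
  qed measurable
qed
lemma bnd_pow[simp]: "bnd f \<Longrightarrow> bnd (\<lambda>\<omega>. f \<omega> ^ n)"
  by (induction n) auto
lemma bnd_minus[simp]: "bnd f \<Longrightarrow> bnd (\<lambda>\<omega>. - f \<omega>)"
  using bnd_diff[of "\<lambda>_. 0" f] by simp
lemma bnd_abs[simp]: "bnd f \<Longrightarrow> bnd (\<lambda>\<omega>. \<bar>f \<omega>\<bar>)"
  unfolding bnd_def by auto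
lemma bnd_fun0[simp]: "(f :: real \<Rightarrow> real) \<in> borel_measurable borel \<Longrightarrow> bnd (\<lambda>\<omega>. f (Y0 \<omega>)) \<longleftrightarrow> (\<exists>B. \<forall>\<omega>\<in>space M. \<bar>f (Y0 \<omega>)\<bar> \<le> B)"
  unfolding bnd_def by auto

lemma bnd_div_lb:
  assumes "bnd f" "bnd g" "0 < d" "\<And>\<omega>. \<omega> \<in> space M \<Longrightarrow> d \<le> g \<omega>"
  shows "bnd (\<lambda>\<omega>. f \<omega> / g \<omega>)"
proof -
  obtain B where B: "\<forall>\<omega>\<in>space M. \<bar>f \<omega>\<bar> \<le> B" and [measurable]: "f \<in> borel_measurable M" "g \<in> borel_measurable M"
    using assms unfolding bnd_def by blast
  show ?thesis
  proof (rule bndI[where B="B/d"])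
    fix \<omega> assume w: "\<omega> \<in> space M"
    have "\<bar>f \<omega> / g \<omega>\<bar> = \<bar>f \<omega>\<bar> / g \<omega>" using assms(3) assms(4)[OF w] by simp
    also have "\<dots> \<le> B / g \<omega>" using B w assms(3) assms(4)[OF w] by (intro divide_right_mono) auto
    also have "\<dots> \<le> B / d" using B w assms(3) assms(4)[OF w] by (intro divide_left_mono) (auto intro: order_trans[OF abs_ge_zero])
    finally show "\<bar>f \<omega> / g \<omega>\<bar> \<le> B / d" .
  qed measurable
qed

lemma bnd_divY1[simp]: "bnd f \<Longrightarrow> bnd (\<lambda>\<omega>. f \<omega> / Y1 \<omega>)"
  using akpos b1 by (intro bnd_div_lb[where d="a*k"]) auto
lemma bnd_divY2[simp]: "bnd f \<Longrightarrow> bnd (\<lambda>\<omega>. f \<omega> / Y2 \<omega>)"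
  using akpos b2 by (intro bnd_div_lb[where d="a*k"]) auto
lemma bnd_divS[simp]: "bnd f \<Longrightarrow> bnd (\<lambda>\<omega>. f \<omega> / (Y1 \<omega> + Y2 \<omega>))"
proof -
  have "a*k \<le> Y1 \<omega> + Y2 \<omega>" if "\<omega> \<in> space M" for \<omega> using b1[OF that] b2[OF that] akpos by linarith
  then show "bnd f \<Longrightarrow> ?thesis" using akpos by (intro bnd_div_lb[where d="a*k"]) auto
qed

definition Yo :: "'a \<Rightarrow> real" where "Yo \<omega> = Y0 \<omega> + par (2 * Y1 \<omega>) (2 * Y2 \<omega>)"

lemma Yo_bnd: "\<omega> \<in> space M \<Longrightarrow> a + a * k \<le> Yo \<omega> \<and> Yo \<omega> \<le> b + b * k"
  using par_bnd[of "a*k" "Y1 \<omega>" "b*k" "Y2 \<omega>"] b0 b1 b2 akpos unfolding Yo_def by force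

lemma bnd_Yo[simp]: "bnd Yo"
proof (rule bndI[where B="b + b*k"])
  show "Yo \<in> borel_measurable M" unfolding Yo_def by measurable
  fix \<omega> assume "\<omega> \<in> space M" then show "\<bar>Yo \<omega>\<bar> \<le> b + b * k" using Yo_bnd[of \<omega>] akpos ab by auto
qed
lemma bnd_divYo[simp]: "bnd f \<Longrightarrow> bnd (\<lambda>\<omega>. f \<omega> / Yo \<omega>)"
  using akpos Yo_bnd ab by (intro bnd_div_lb[where d="a + a*k"]) auto

end

lemma cube_sum: "0 \<le> x \<Longrightarrow> 0 \<le> y \<Longrightarrow> (x+y)^3 \<le> 4*(x^3+(y::real)^3)"
proof -
  assume x: "0 \<le> x" and y: "0 \<le> y"
  have "0 \<le> (x+y)*(x-y)^2" using x y by simp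
  then show ?thesis by (simp add: power2_eq_square power3_eq_cube algebra_simps)
qed

lemma cube_le: "\<bar>p::real\<bar>^3 \<le> (p^4 + p^2)/2"
proof -
  have "0 \<le> p^2 * (\<bar>p\<bar> - 1)^2" by simp
  then have "0 \<le> \<bar>p\<bar>^2*\<bar>p\<bar>^2 - 2*\<bar>p\<bar>^2*\<bar>p\<bar> + \<bar>p\<bar>^2" by (simp add: power2_diff algebra_simps)
  moreover have "\<bar>p\<bar>^2*\<bar>p\<bar>^2 = p^4" by (simp flip: power_add)
  moreover have "\<bar>p\<bar>^2*\<bar>p\<bar> = \<bar>p\<bar>^3" by (simp add: power2_eq_square power3_eq_cube)
  moreover have "\<bar>p\<bar>^2 = p^2" by simp
  ultimately show ?thesis by simp
qed

lemma pW: "(p-q)^2 * \<bar>p+q\<bar> \<le> 2*(p^4 + p^2 + q^4 + (q::real)^2)"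
proof -
  have "\<bar>p-q\<bar>^2 \<le> (\<bar>p\<bar>+\<bar>q\<bar>)^2"
    by (rule power_mono) (auto simp: abs_triangle_ineq4)
  then have "(p-q)^2 \<le> (\<bar>p\<bar>+\<bar>q\<bar>)^2" by simp
  moreover have "\<bar>p+q\<bar> \<le> \<bar>p\<bar>+\<bar>q\<bar>" by (rule abs_triangle_ineq)
  ultimately have "(p-q)^2 * \<bar>p+q\<bar> \<le> (\<bar>p\<bar>+\<bar>q\<bar>)^2 * (\<bar>p\<bar>+\<bar>q\<bar>)"
    by (intro mult_mono) auto
  also have "\<dots> = (\<bar>p\<bar>+\<bar>q\<bar>)^3" by (simp add: power2_eq_square power3_eq_cube)
  also have "\<dots> \<le> 4*(\<bar>p\<bar>^3+\<bar>q\<bar>^3)" by (rule cube_sum) auto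
  also have "\<dots> \<le> 2*(p^4 + p^2 + q^4 + q^2)"
  proof -
    have "2*\<bar>p\<bar>^3 \<le> p^4+p^2" "2*\<bar>q\<bar>^3 \<le> q^4+q^2" using cube_le[of p] cube_le[of q] by simp_all
    then show ?thesis by simp
  qed
  finally show ?thesis .
qed

lemma pW4: "(p-q)^4 \<le> 8*(p^4 + (q::real)^4)"
proof -
  have "(p-q)^2 \<le> 2*(p^2+q^2)"
  proof -
    have "0 \<le> (p+q)^2" by simp
    then show ?thesis by (simp add: power2_eq_square algebra_simps)
  qed
  then have "((p-q)^2)^2 \<le> (2*(p^2+q^2))^2" by (intro power_mono) auto
  also have "\<dots> \<le> 8*(p^4+q^4)"
  proof -
    have "0 \<le> (p^2-q^2)^2" by simp
    then show ?thesis by (simp add: power2_eq_square algebra_simps eval_nat_numeral)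
  qed
  finally show ?thesis by (simp flip: power_mult)
qed

lemma par_D: "0 < y + z \<Longrightarrow> par (2*y) (2*z) = (y+z)/2 - (y-z)^2/(2*(y+z))"
  unfolding par_def by (simp add: field_simps power2_eq_square)

lemma pD1:
  fixes y z K :: real
  assumes "0 < K" "K \<le> y" "K \<le> z"
  shows "0 \<le> (y-z)^2/(2*(y+z)) \<and> (y-z)^2/(2*(y+z)) \<le> (y-z)^2/(4*K)"
  using assms by (auto intro!: divide_left_mono)

lemma pD2:
  fixes y z K m :: real
  assumes "0 < K" "K \<le> y" "K \<le> z" "K \<le> m"
  shows "\<bar>(y-z)^2/(2*(y+z)) - (y-z)^2/(4*m)\<bar> \<le> (y-z)^2 * \<bar>y+z-2*m\<bar> / (8*K^2)"
proof -
  have gen: "X/(2*S) - X/(4*m) = X*(2*m-S)/(4*m*S)" if "S \<noteq> 0" "m \<noteq> 0" for X S :: real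
    using that by (simp add: field_simps)
  have e: "(y-z)^2/(2*(y+z)) - (y-z)^2/(4*m) = (y-z)^2*(2*m-(y+z))/(4*m*(y+z))"
    using assms by (intro gen) auto
  have d: "8*K^2 \<le> 4*m*(y+z)"
  proof -
    have "K*(2*K) \<le> m*(y+z)" using assms by (intro mult_mono) auto
    then show ?thesis by (simp add: power2_eq_square)
  qed
  have "\<bar>(y-z)^2*(2*m-(y+z))/(4*m*(y+z))\<bar> = (y-z)^2*\<bar>y+z-2*m\<bar>/(4*m*(y+z))"
    using assms by (simp add: abs_mult abs_divide abs_minus_commute)
  also have "\<dots> \<le> (y-z)^2*\<bar>y+z-2*m\<bar>/(8*K^2)"
    using assms d by (intro divide_left_mono) auto
  finally show ?thesis unfolding e .
qed

context lev begin

lemma E_sq_expand: "bnd Z \<Longrightarrow> (\<integral>\<omega>. (Z \<omega> - t)^2 \<partial>M) = (\<integral>\<omega>. (Z \<omega>)^2 \<partial>M) - 2*t*(\<integral>\<omega>. Z \<omega> \<partial>M) + t^2"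
proof -
  assume Z: "bnd Z"
  have "(\<integral>\<omega>. (Z \<omega> - t)^2 \<partial>M) = (\<integral>\<omega>. ((Z \<omega>)^2 - (2*t) * Z \<omega>) + t^2 \<partial>M)"
    by (simp add: power2_diff algebra_simps)
  also have "\<dots> = (\<integral>\<omega>. (Z \<omega>)^2 \<partial>M) - 2*t*(\<integral>\<omega>. Z \<omega> \<partial>M) + t^2"
    using Z by (simp add: prob_space)
  finally show ?thesis .
qed

lemma var_le: "bnd Z \<Longrightarrow> (\<integral>\<omega>. (Z \<omega> - (\<integral>\<omega>. Z \<omega> \<partial>M))^2 \<partial>M) \<le> (\<integral>\<omega>. (Z \<omega> - t)^2 \<partial>M)"
proof -
  assume Z: "bnd Z"
  define m where "m = (\<integral>\<omega>. Z \<omega> \<partial>M)"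
  define A where "A = (\<integral>\<omega>. (Z \<omega>)^2 \<partial>M)"
  have 1: "(\<integral>\<omega>. (Z \<omega> - t)^2 \<partial>M) = A - 2*t*m + t^2" using E_sq_expand[OF Z] by (simp add: A_def m_def)
  have 2: "(\<integral>\<omega>. (Z \<omega> - m)^2 \<partial>M) = A - m^2" using E_sq_expand[OF Z] by (simp add: A_def m_def power2_eq_square)
  have 3: "0 \<le> (m - t)^2" by simp
  have 4: "(m - t)^2 = m^2 - 2*t*m + t^2" by (simp add: power2_diff)
  show ?thesis unfolding m_def[symmetric] 1 2 using 3 4 by linarith
qed

lemma sq_le: "bnd (Z::'a\<Rightarrow>real) \<Longrightarrow> (\<integral>\<omega>. Z \<omega> \<partial>M)^2 \<le> (\<integral>\<omega>. (Z \<omega>)^2 \<partial>M)"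
proof -
  assume Z: "bnd Z"
  have "0 \<le> (\<integral>\<omega>. (Z \<omega> - (\<integral>\<omega>. Z \<omega> \<partial>M))^2 \<partial>M)" by (intro integral_nonneg_AE) auto
  moreover have "(\<integral>\<omega>. (Z \<omega> - (\<integral>\<omega>. Z \<omega> \<partial>M))^2 \<partial>M) = (\<integral>\<omega>. (Z \<omega>)^2 \<partial>M) - (\<integral>\<omega>. Z \<omega> \<partial>M)^2"
    using E_sq_expand[OF Z, of "\<integral>\<omega>. Z \<omega> \<partial>M"] by (simp add: power2_eq_square)
  ultimately show ?thesis by linarith
qed

lemma E_mono: "bnd f \<Longrightarrow> bnd g \<Longrightarrow> (\<And>\<omega>. \<omega> \<in> space M \<Longrightarrow> f \<omega> \<le> g \<omega>) \<Longrightarrow> (\<integral>\<omega>. f \<omega> \<partial>M) \<le> (\<integral>\<omega>. g \<omega> \<partial>M)"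
  by (rule integral_mono) auto

lemma E_bounds: "bnd f \<Longrightarrow> (\<And>\<omega>. \<omega> \<in> space M \<Longrightarrow> lo \<le> f \<omega> \<and> f \<omega> \<le> hi) \<Longrightarrow> lo \<le> (\<integral>\<omega>. f \<omega> \<partial>M) \<and> (\<integral>\<omega>. f \<omega> \<partial>M) \<le> hi"
  using E_mono[of "\<lambda>_. lo" f] E_mono[of f "\<lambda>_. hi"] by (auto simp: prob_space)

lemma E_abs: "bnd f \<Longrightarrow> \<bar>\<integral>\<omega>. f \<omega> \<partial>M\<bar> \<le> (\<integral>\<omega>. \<bar>f \<omega>\<bar> \<partial>M)"
  using integral_abs_bound[of M f] by simp

definition "cQ = (\<integral>\<omega>. 1 / Y1 \<omega> \<partial>M)"
definition "VQ = (\<integral>\<omega>. (1 / Y1 \<omega> - cQ)^2 \<partial>M)"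
definition "FQ = (\<integral>\<omega>. (1 / Y1 \<omega> - cQ)^4 \<partial>M)"

lemma binom2: "((p::real)+q)^2 = p^2 + 2*(p*q) + q^2" by (simp add: power2_eq_square algebra_simps)
lemma binom4: "((p::real)+q)^4 = p^4 + 4*(p^3*q) + 6*(p^2*q^2) + 4*(p*q^3) + q^4"
  by algebra
lemma sum_split: "1/y + 1/z - 2*(c::real) = (1/y - c) + (1/z - c)" by simp

lemma Y1pos: "\<omega> \<in> space M \<Longrightarrow> 0 < Y1 \<omega>" using b1 akpos by (meson less_le_trans)
lemma Y2pos: "\<omega> \<in> space M \<Longrightarrow> 0 < Y2 \<omega>" using b2 akpos by (meson less_le_trans)
lemma Y0pos: "\<omega> \<in> space M \<Longrightarrow> 0 < Y0 \<omega>" using b0 ab by (meson less_le_trans)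

lemma inv_bnd: "\<omega> \<in> space M \<Longrightarrow> 1/(b*k) \<le> 1/Y1 \<omega> \<and> 1/Y1 \<omega> \<le> 1/(a*k)"
proof -
  assume w: "\<omega> \<in> space M"
  have "0 < b*k" using ab k1 by simp
  then show ?thesis using b1[OF w] akpos ab k1 Y1pos[OF w] by (auto intro!: divide_left_mono mult_pos_pos)
qed

lemma cQ_bnd: "1/(b*k) \<le> cQ \<and> cQ \<le> 1/(a*k)"
  unfolding cQ_def by (rule E_bounds) (auto dest: inv_bnd)

lemma cQ_pos: "0 < cQ"
proof -
  have "0 < 1/(b*k)" using ab k1 by simp
  then show ?thesis using cQ_bnd by linarith
qed

lemma VQ_nonneg: "0 \<le> VQ" unfolding VQ_def by (intro integral_nonneg_AE) auto
lemma FQ_nonneg: "0 \<le> FQ" unfolding FQ_def by (intro integral_nonneg_AE) auto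

lemma al_mean: "(\<integral>\<omega>. 1/Y1 \<omega> - cQ \<partial>M) = 0" by (simp add: cQ_def prob_space)
lemma be_mean: "(\<integral>\<omega>. 1/Y2 \<omega> - cQ \<partial>M) = 0"
  using EL[of "\<lambda>y. 1/y - cQ"] al_mean by simp
lemma be_pow: "(\<integral>\<omega>. (1/Y2 \<omega> - cQ)^n \<partial>M) = (\<integral>\<omega>. (1/Y1 \<omega> - cQ)^n \<partial>M)"
  using EL[of "\<lambda>y. (1/y - cQ)^n"] by simp

lemma u2: "(\<integral>\<omega>. (1/Y1 \<omega> + 1/Y2 \<omega> - 2*cQ)^2 \<partial>M) = 2 * VQ"
proof -
  have "(\<integral>\<omega>. (1/Y1 \<omega> + 1/Y2 \<omega> - 2*cQ)^2 \<partial>M) =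
    (\<integral>\<omega>. (1/Y1 \<omega> - cQ)^2 + 2 * ((1/Y1 \<omega> - cQ) * (1/Y2 \<omega> - cQ)) + (1/Y2 \<omega> - cQ)^2 \<partial>M)"
    by (rule Bochner_Integration.integral_cong) (simp_all only: sum_split binom2)
  also have "\<dots> = (\<integral>\<omega>. (1/Y1 \<omega> - cQ)^2 \<partial>M) + 2 * (\<integral>\<omega>. (1/Y1 \<omega> - cQ) * (1/Y2 \<omega> - cQ) \<partial>M) + (\<integral>\<omega>. (1/Y2 \<omega> - cQ)^2 \<partial>M)"
    by simp
  also have "(\<integral>\<omega>. (1/Y1 \<omega> - cQ) * (1/Y2 \<omega> - cQ) \<partial>M) = 0"
    using E12[where f="\<lambda>y. 1/y - cQ" and g="\<lambda>z. 1/z - cQ"] be_mean by simp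
  finally show ?thesis using be_pow[of 2] by (simp add: VQ_def)
qed

lemma u4: "(\<integral>\<omega>. (1/Y1 \<omega> + 1/Y2 \<omega> - 2*cQ)^4 \<partial>M) = 2 * FQ + 6 * VQ^2"
proof -
  let ?a = "\<lambda>\<omega>. 1/Y1 \<omega> - cQ" and ?b = "\<lambda>\<omega>. 1/Y2 \<omega> - cQ"
  have "(\<integral>\<omega>. (1/Y1 \<omega> + 1/Y2 \<omega> - 2*cQ)^4 \<partial>M) =
    (\<integral>\<omega>. (?a \<omega>)^4 + 4 * ((?a \<omega>)^3 * ?b \<omega>) + 6 * ((?a \<omega>)^2 * (?b \<omega>)^2) + 4 * (?a \<omega> * (?b \<omega>)^3) + (?b \<omega>)^4 \<partial>M)"
    by (rule Bochner_Integration.integral_cong) (simp_all only: sum_split binom4)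
  also have "\<dots> = (\<integral>\<omega>. (?a \<omega>)^4 \<partial>M) + 4 * (\<integral>\<omega>. (?a \<omega>)^3 * ?b \<omega> \<partial>M) + 6 * (\<integral>\<omega>. (?a \<omega>)^2 * (?b \<omega>)^2 \<partial>M)
      + 4 * (\<integral>\<omega>. ?a \<omega> * (?b \<omega>)^3 \<partial>M) + (\<integral>\<omega>. (?b \<omega>)^4 \<partial>M)"
    by simp
  also have "(\<integral>\<omega>. (?a \<omega>)^3 * ?b \<omega> \<partial>M) = 0"
    using E12[where f="\<lambda>y. (1/y - cQ)^3" and g="\<lambda>z. 1/z - cQ"] be_mean by simp
  also have "(\<integral>\<omega>. ?a \<omega> * (?b \<omega>)^3 \<partial>M) = 0"
    using E12[where f="\<lambda>y. 1/y - cQ" and g="\<lambda>z. (1/z - cQ)^3"] al_mean by simp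
  also have "(\<integral>\<omega>. (?a \<omega>)^2 * (?b \<omega>)^2 \<partial>M) = VQ^2"
    using E12[where f="\<lambda>y. (1/y - cQ)^2" and g="\<lambda>z. (1/z - cQ)^2"] be_pow[of 2] by (simp add: VQ_def power2_eq_square)
  finally show ?thesis using be_pow[of 4] by (simp add: FQ_def)
qed

definition "eQ = (b - a) / (a * k)^2"
definition "gam = 2*cQ/(2*b*cQ+2)"
definition "g0 \<omega> = 2*cQ/(2*Y0 \<omega>*cQ+2)"
definition "uu \<omega> = 1/Y1 \<omega> + 1/Y2 \<omega> - 2*cQ"
definition "TT \<omega> = 1/Yo \<omega> - g0 \<omega>"

lemma p0_bnd: "\<omega> \<in> space M \<Longrightarrow> 2 \<le> 2*Y0 \<omega>*cQ+2"
proof -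
  assume w: "\<omega> \<in> space M"
  have "0 \<le> Y0 \<omega> * cQ" using Y0pos[OF w] cQ_pos by simp
  then show ?thesis by simp
qed

lemma p0_nn[simp]: "\<omega> \<in> space M \<Longrightarrow> 0 \<le> Y0 \<omega> * cQ"
  using Y0pos[of \<omega>] cQ_pos by simp

lemma bnd_divc[simp]: "bnd f \<Longrightarrow> bnd (\<lambda>\<omega>. f \<omega> / c)"
  using bnd_mult[of f "\<lambda>_. 1/c"] by simp

definition "pinv \<omega> = 2 / (2*Y0 \<omega>*cQ+2)^2"
lemma bnd_pinv[simp]: "bnd pinv"
  unfolding pinv_def
proof (rule bnd_div_lb[where d=4])
  fix \<omega> assume w: "\<omega> \<in> space M"
  show "4 \<le> (2*Y0 \<omega>*cQ+2)^2" using p0_bnd[OF w] power_mono[of 2 "2*Y0 \<omega>*cQ+2" 2] by simp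
qed simp_all

lemma bnd_g0[simp]: "bnd g0"
  unfolding g0_def by (rule bnd_div_lb[where d=2]) (auto simp: p0_bnd)
lemma bnd_uu[simp]: "bnd uu" unfolding uu_def by simp
lemma bnd_TT[simp]: "bnd TT" unfolding TT_def by simp

lemma pt_T: "\<omega> \<in> space M \<Longrightarrow> \<bar>TT \<omega>\<bar> \<le> \<bar>uu \<omega>\<bar>/2 \<and> \<bar>TT \<omega> - 2*uu \<omega>/(2*Y0 \<omega>*cQ+2)^2\<bar> \<le> b*(uu \<omega>)^2/4"
  using Qpt[of "Y0 \<omega>" b "Y1 \<omega>" "Y2 \<omega>" cQ] Y0pos[of \<omega>] b0[of \<omega>] Y1pos[of \<omega>] Y2pos[of \<omega>] cQ_pos
  unfolding TT_def g0_def uu_def Yo_def by (simp add: less_imp_le)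

lemma pt_g0: "\<omega> \<in> space M \<Longrightarrow> gam \<le> g0 \<omega> \<and> g0 \<omega> \<le> gam + eQ"
proof -
  assume w: "\<omega> \<in> space M"
  have "(b-a)*cQ^2 \<le> (b-a)*(1/(a*k))^2"
    using cQ_bnd cQ_pos ab by (intro mult_left_mono power_mono) auto
  then have "(b-a)*cQ^2 \<le> eQ" by (simp add: eQ_def power_divide)
  then show ?thesis using g0pt[of a "Y0 \<omega>" b cQ] b0[OF w] ab cQ_pos unfolding g0_def gam_def by auto
qed

lemma eQ_nonneg: "0 \<le> eQ" using ab unfolding eQ_def by simp

lemma Q_var: "(\<integral>\<omega>. (1/Yo \<omega> - (\<integral>\<omega>. 1/Yo \<omega> \<partial>M))^2 \<partial>M) \<le> 3/4 * VQ + 3 * eQ^2"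
proof -
  have "(\<integral>\<omega>. (1/Yo \<omega> - (\<integral>\<omega>. 1/Yo \<omega> \<partial>M))^2 \<partial>M) \<le> (\<integral>\<omega>. (1/Yo \<omega> - gam)^2 \<partial>M)"
    by (rule var_le) simp
  also have "\<dots> \<le> (\<integral>\<omega>. 3/8 * (uu \<omega>)^2 + 3 * eQ^2 \<partial>M)"
  proof (rule E_mono)
    fix \<omega> assume w: "\<omega> \<in> space M"
    have e1: "1/Yo \<omega> - gam = TT \<omega> + (g0 \<omega> - gam)" unfolding TT_def by simp
    have t: "(TT \<omega>)^2 \<le> (uu \<omega>)^2/4"
    proof -
      have "\<bar>TT \<omega>\<bar>^2 \<le> (\<bar>uu \<omega>\<bar>/2)^2" using pt_T[OF w] by (intro power_mono) auto
      then show ?thesis by (simp add: power_divide)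
    qed
    have g: "(g0 \<omega> - gam)^2 \<le> eQ^2" using pt_g0[OF w] by (intro power_mono) auto
    show "(1/Yo \<omega> - gam)^2 \<le> 3/8 * (uu \<omega>)^2 + 3 * eQ^2"
      unfolding e1 using sq_ineq2[of "TT \<omega>" "g0 \<omega> - gam"] t g by linarith
  qed simp_all
  also have "\<dots> = 3/8 * (2 * VQ) + 3 * eQ^2"
    using u2 by (simp add: uu_def prob_space)
  finally show ?thesis by simp
qed

lemma ET_bnd: "\<bar>\<integral>\<omega>. TT \<omega> \<partial>M\<bar> \<le> b * VQ / 2"
proof -
  have "(\<integral>\<omega>. pinv \<omega> * uu \<omega> \<partial>M) = (\<integral>\<omega>. pinv \<omega> \<partial>M) * (\<integral>\<omega>. uu \<omega> \<partial>M)"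
    using E0[where f="\<lambda>x. 2 / (2*x*cQ+2)^2" and \<phi>="\<lambda>p. 1/fst p + 1/snd p - 2*cQ"]
    using bnd_pinv[unfolded pinv_def] by (simp add: uu_def pinv_def[abs_def])
  also have "(\<integral>\<omega>. uu \<omega> \<partial>M) = 0" using al_mean be_mean unfolding uu_def
    by (simp add: prob_space cQ_def)
  finally have z: "(\<integral>\<omega>. pinv \<omega> * uu \<omega> \<partial>M) = 0" by simp
  have "(\<integral>\<omega>. TT \<omega> \<partial>M) = (\<integral>\<omega>. TT \<omega> - pinv \<omega> * uu \<omega> \<partial>M) + (\<integral>\<omega>. pinv \<omega> * uu \<omega> \<partial>M)"
    by simp
  also have "\<dots> = (\<integral>\<omega>. TT \<omega> - pinv \<omega> * uu \<omega> \<partial>M)" using z by simp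
  finally have "\<bar>\<integral>\<omega>. TT \<omega> \<partial>M\<bar> \<le> (\<integral>\<omega>. \<bar>TT \<omega> - pinv \<omega> * uu \<omega>\<bar> \<partial>M)"
    using E_abs[of "\<lambda>\<omega>. TT \<omega> - pinv \<omega> * uu \<omega>"] by simp
  also have "\<dots> \<le> (\<integral>\<omega>. b * (uu \<omega>)^2 / 4 \<partial>M)"
  proof (rule E_mono)
    fix \<omega> assume w: "\<omega> \<in> space M"
    have "pinv \<omega> * uu \<omega> = 2*uu \<omega>/(2*Y0 \<omega>*cQ+2)^2" by (simp add: pinv_def)
    then show "\<bar>TT \<omega> - pinv \<omega> * uu \<omega>\<bar> \<le> b * (uu \<omega>)^2 / 4" using pt_T[OF w] by simp
  qed simp_all
  also have "\<dots> = b * VQ / 2" using u2 by (simp add: uu_def)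
  finally show ?thesis .
qed

lemma Q_4: "(\<integral>\<omega>. (1/Yo \<omega> - (\<integral>\<omega>. 1/Yo \<omega> \<partial>M))^4 \<partial>M) \<le> FQ/3 + VQ^2 + 65*b^4*VQ^4 + 729*eQ^4"
proof -
  define ET where "ET = (\<integral>\<omega>. TT \<omega> \<partial>M)"
  define Eg where "Eg = (\<integral>\<omega>. g0 \<omega> \<partial>M)"
  have c': "(\<integral>\<omega>. 1/Yo \<omega> \<partial>M) = ET + Eg"
  proof -
    have "(\<integral>\<omega>. 1/Yo \<omega> \<partial>M) = (\<integral>\<omega>. TT \<omega> + g0 \<omega> \<partial>M)" by (simp add: TT_def)
    then show ?thesis by (simp add: ET_def Eg_def)
  qed
  have Eg: "gam \<le> Eg \<and> Eg \<le> gam + eQ" unfolding Eg_def by (rule E_bounds) (auto dest: pt_g0)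
  let ?A = "729/512 :: real" and ?B = "729 :: real"
  have "(\<integral>\<omega>. (1/Yo \<omega> - (\<integral>\<omega>. 1/Yo \<omega> \<partial>M))^4 \<partial>M) \<le> (\<integral>\<omega>. ?A*(?A*(uu \<omega>)^4/16 + ?B*ET^4) + ?B*eQ^4 \<partial>M)"
  proof (rule E_mono)
    fix \<omega> assume w: "\<omega> \<in> space M"
    have e1: "1/Yo \<omega> - (\<integral>\<omega>. 1/Yo \<omega> \<partial>M) = (TT \<omega> - ET) + (g0 \<omega> - Eg)" unfolding c' TT_def by simp
    have t: "(TT \<omega>)^4 \<le> (uu \<omega>)^4/16"
    proof -
      have "\<bar>TT \<omega>\<bar>^4 \<le> (\<bar>uu \<omega>\<bar>/2)^4" using pt_T[OF w] by (intro power_mono) auto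
      then show ?thesis by (simp add: power_divide power_even_abs_numeral)
    qed
    have g: "(g0 \<omega> - Eg)^4 \<le> eQ^4"
    proof -
      have "\<bar>g0 \<omega> - Eg\<bar> \<le> eQ" using pt_g0[OF w] Eg by auto
      then have "\<bar>g0 \<omega> - Eg\<bar>^4 \<le> eQ^4" by (intro power_mono) auto
      then show ?thesis by (simp add: power_even_abs_numeral)
    qed
    have h: "(TT \<omega> - ET)^4 \<le> ?A*(TT \<omega>)^4 + ?B*ET^4"
      using four_ineq[of "TT \<omega>" "- ET"] by simp
    have "(1/Yo \<omega> - (\<integral>\<omega>. 1/Yo \<omega> \<partial>M))^4 \<le> ?A*(TT \<omega> - ET)^4 + ?B*(g0 \<omega> - Eg)^4"
      unfolding e1 by (rule four_ineq)
    also have "\<dots> \<le> ?A*(?A*(uu \<omega>)^4/16 + ?B*ET^4) + ?B*eQ^4"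
      using h t g by (intro add_mono mult_left_mono) auto
    finally show "(1/Yo \<omega> - (\<integral>\<omega>. 1/Yo \<omega> \<partial>M))^4 \<le> ?A*(?A*(uu \<omega>)^4/16 + ?B*ET^4) + ?B*eQ^4" .
  qed simp_all
  also have "\<dots> = ?A*(?A*(2*FQ + 6*VQ^2)/16 + ?B*ET^4) + ?B*eQ^4"
    using u4 by (simp add: uu_def prob_space)
  also have "\<dots> \<le> ?A*(?A*(2*FQ + 6*VQ^2)/16 + ?B*(b*VQ/2)^4) + ?B*eQ^4"
  proof -
    have "\<bar>ET\<bar>^4 \<le> (b*VQ/2)^4" using ET_bnd unfolding ET_def by (intro power_mono) auto
    then have "ET^4 \<le> (b*VQ/2)^4" by (simp add: power_even_abs_numeral)
    then show ?thesis by simp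
  qed
  also have "\<dots> \<le> FQ/3 + VQ^2 + 65*b^4*VQ^4 + 729*eQ^4"
    using FQ_nonneg VQ_nonneg by (simp add: power_divide power_mult_distrib field_simps)
  finally show ?thesis .
qed

end

context lev begin

definition "mR = (\<integral>\<omega>. Y1 \<omega> \<partial>M)"
definition "vR = (\<integral>\<omega>. (Y1 \<omega> - mR)^2 \<partial>M)"
definition "M4 = (\<integral>\<omega>. (Y1 \<omega> - mR)^4 \<partial>M)"
definition "mu = (\<integral>\<omega>. Y0 \<omega> \<partial>M)"
definition "sig = (\<integral>\<omega>. (Y0 \<omega> - mu)^2 \<partial>M)"
definition "DD \<omega> = (Y1 \<omega> - Y2 \<omega>)^2 / (2*(Y1 \<omega> + Y2 \<omega>))"

lemma bnd_DD[simp]: "bnd DD"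
  unfolding DD_def
proof (rule bnd_div_lb[where d="2*(a*k)"])
  fix \<omega> assume w: "\<omega> \<in> space M"
  have "a*k \<le> Y1 \<omega>" "a*k \<le> Y2 \<omega>" using b1[OF w] b2[OF w] by auto
  then show "2*(a*k) \<le> 2*(Y1 \<omega> + Y2 \<omega>)" using akpos by (simp add: algebra_simps)
qed (use akpos in simp_all)

lemma S_pos: "\<omega> \<in> space M \<Longrightarrow> 0 < Y1 \<omega> + Y2 \<omega>" using Y1pos Y2pos by (simp add: add_pos_pos)

lemma Yo_eq: "\<omega> \<in> space M \<Longrightarrow> Yo \<omega> = Y0 \<omega> + (Y1 \<omega> + Y2 \<omega>)/2 - DD \<omega>"
  unfolding Yo_def DD_def using par_D[OF S_pos] by simp

lemma mR_bnd: "a*k \<le> mR \<and> mR \<le> b*k" unfolding mR_def by (rule E_bounds) (auto dest: b1)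

lemma W1_mean: "(\<integral>\<omega>. Y1 \<omega> - mR \<partial>M) = 0" by (simp add: mR_def prob_space)
lemma W2_pow: "(\<integral>\<omega>. (Y2 \<omega> - mR)^n \<partial>M) = (\<integral>\<omega>. (Y1 \<omega> - mR)^n \<partial>M)"
  using EL[of "\<lambda>y. (y - mR)^n"] by simp
lemma W2_mean: "(\<integral>\<omega>. Y2 \<omega> - mR \<partial>M) = 0" using W2_pow[of 1] W1_mean by simp

lemma vR_nonneg: "0 \<le> vR" unfolding vR_def by (intro integral_nonneg_AE) auto
lemma M4_nonneg: "0 \<le> M4" unfolding M4_def by (intro integral_nonneg_AE) auto

lemma diff_split: "(y::real) - z = (y - m) - (z - m)" by simp

lemma Delta2: "(\<integral>\<omega>. (Y1 \<omega> - Y2 \<omega>)^2 \<partial>M) = 2 * vR"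
proof -
  let ?a = "\<lambda>\<omega>. Y1 \<omega> - mR" and ?b = "\<lambda>\<omega>. Y2 \<omega> - mR"
  have "(\<integral>\<omega>. (Y1 \<omega> - Y2 \<omega>)^2 \<partial>M) = (\<integral>\<omega>. (?a \<omega>)^2 - 2 * (?a \<omega> * ?b \<omega>) + (?b \<omega>)^2 \<partial>M)"
    by (rule Bochner_Integration.integral_cong) (simp_all add: power2_eq_square algebra_simps)
  also have "\<dots> = (\<integral>\<omega>. (?a \<omega>)^2 \<partial>M) - 2 * (\<integral>\<omega>. ?a \<omega> * ?b \<omega> \<partial>M) + (\<integral>\<omega>. (?b \<omega>)^2 \<partial>M)"
    by simp
  also have "(\<integral>\<omega>. ?a \<omega> * ?b \<omega> \<partial>M) = 0"
    using E12[where f="\<lambda>y. y - mR" and g="\<lambda>z. z - mR"] W2_mean by simp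
  finally show ?thesis using W2_pow[of 2] by (simp add: vR_def)
qed

lemma sum_split2: "(y::real) + z - 2*m = (y - m) + (z - m)" by simp

lemma cubic_bnd: "(\<integral>\<omega>. (Y1 \<omega> - Y2 \<omega>)^2 * \<bar>Y1 \<omega> + Y2 \<omega> - 2*mR\<bar> \<partial>M) \<le> 4*(M4 + vR)"
proof -
  have "(\<integral>\<omega>. (Y1 \<omega> - Y2 \<omega>)^2 * \<bar>Y1 \<omega> + Y2 \<omega> - 2*mR\<bar> \<partial>M) \<le>
     (\<integral>\<omega>. 2*((Y1 \<omega> - mR)^4 + (Y1 \<omega> - mR)^2 + (Y2 \<omega> - mR)^4 + (Y2 \<omega> - mR)^2) \<partial>M)"
  proof (rule E_mono)
    fix \<omega> show "(Y1 \<omega> - Y2 \<omega>)^2 * \<bar>Y1 \<omega> + Y2 \<omega> - 2*mR\<bar> \<le> 2*((Y1 \<omega> - mR)^4 + (Y1 \<omega> - mR)^2 + (Y2 \<omega> - mR)^4 + (Y2 \<omega> - mR)^2)"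
    proof -
      have e1: "(Y1 \<omega> - mR) - (Y2 \<omega> - mR) = Y1 \<omega> - Y2 \<omega>" and e2: "(Y1 \<omega> - mR) + (Y2 \<omega> - mR) = Y1 \<omega> + Y2 \<omega> - 2*mR" by simp_all
      show ?thesis using pW[of "Y1 \<omega> - mR" "Y2 \<omega> - mR", unfolded e1 e2] .
    qed
  qed simp_all
  also have "\<dots> = 4*(M4 + vR)" using W2_pow[of 2] W2_pow[of 4] by (simp add: M4_def vR_def)
  finally show ?thesis .
qed

lemma quart_bnd: "(\<integral>\<omega>. (Y1 \<omega> - Y2 \<omega>)^4 \<partial>M) \<le> 16*M4"
proof -
  have "(\<integral>\<omega>. (Y1 \<omega> - Y2 \<omega>)^4 \<partial>M) \<le> (\<integral>\<omega>. 8*((Y1 \<omega> - mR)^4 + (Y2 \<omega> - mR)^4) \<partial>M)"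
  proof (rule E_mono)
    fix \<omega> show "(Y1 \<omega> - Y2 \<omega>)^4 \<le> 8*((Y1 \<omega> - mR)^4 + (Y2 \<omega> - mR)^4)"
    proof -
      have e1: "(Y1 \<omega> - mR) - (Y2 \<omega> - mR) = Y1 \<omega> - Y2 \<omega>" by simp
      show ?thesis using pW4[of "Y1 \<omega> - mR" "Y2 \<omega> - mR", unfolded e1] .
    qed
  qed simp_all
  also have "\<dots> = 16*M4" using W2_pow[of 4] by (simp add: M4_def)
  finally show ?thesis .
qed

lemma R_mean: "(\<integral>\<omega>. Yo \<omega> \<partial>M) = mu + mR - (\<integral>\<omega>. DD \<omega> \<partial>M)"
proof -
  have "(\<integral>\<omega>. Yo \<omega> \<partial>M) = (\<integral>\<omega>. Y0 \<omega> + (Y1 \<omega> + Y2 \<omega>)/2 - DD \<omega> \<partial>M)"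
    by (rule Bochner_Integration.integral_cong) (simp_all add: Yo_eq)
  also have "\<dots> = mu + mR - (\<integral>\<omega>. DD \<omega> \<partial>M)"
    using W2_mean W1_mean by (simp add: mu_def mR_def prob_space)
  finally show ?thesis .
qed

lemma DD_bnd: "\<omega> \<in> space M \<Longrightarrow> 0 \<le> DD \<omega> \<and> DD \<omega> \<le> (Y1 \<omega> - Y2 \<omega>)^2/(4*(a*k))"
  unfolding DD_def using pD1[OF akpos, of "Y1 \<omega>" "Y2 \<omega>"] b1 b2 by auto

lemma ED_bnd: "0 \<le> (\<integral>\<omega>. DD \<omega> \<partial>M) \<and> (\<integral>\<omega>. DD \<omega> \<partial>M) \<le> vR/(2*(a*k))"
proof
  show "0 \<le> (\<integral>\<omega>. DD \<omega> \<partial>M)" using DD_bnd by (intro integral_nonneg_AE) auto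
  have "(\<integral>\<omega>. DD \<omega> \<partial>M) \<le> (\<integral>\<omega>. (Y1 \<omega> - Y2 \<omega>)^2/(4*(a*k)) \<partial>M)"
    by (rule E_mono) (use DD_bnd in auto)
  also have "\<dots> = vR/(2*(a*k))" using Delta2 by simp
  finally show "(\<integral>\<omega>. DD \<omega> \<partial>M) \<le> vR/(2*(a*k))" .
qed

lemma ED_approx: "\<bar>(\<integral>\<omega>. DD \<omega> \<partial>M) - vR/(2*mR)\<bar> \<le> (M4 + vR)/(2*(a*k)^2)"
proof -
  have "(\<integral>\<omega>. DD \<omega> \<partial>M) - vR/(2*mR) = (\<integral>\<omega>. DD \<omega> - (Y1 \<omega> - Y2 \<omega>)^2/(4*mR) \<partial>M)"
    using Delta2 mR_bnd akpos by simp
  then have "\<bar>(\<integral>\<omega>. DD \<omega> \<partial>M) - vR/(2*mR)\<bar> \<le> (\<integral>\<omega>. \<bar>DD \<omega> - (Y1 \<omega> - Y2 \<omega>)^2/(4*mR)\<bar> \<partial>M)"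
    using E_abs[of "\<lambda>\<omega>. DD \<omega> - (Y1 \<omega> - Y2 \<omega>)^2/(4*mR)"] by simp
  also have "\<dots> \<le> (\<integral>\<omega>. (Y1 \<omega> - Y2 \<omega>)^2 * \<bar>Y1 \<omega> + Y2 \<omega> - 2*mR\<bar> / (8*(a*k)^2) \<partial>M)"
  proof (rule E_mono)
    fix \<omega> assume w: "\<omega> \<in> space M"
    show "\<bar>DD \<omega> - (Y1 \<omega> - Y2 \<omega>)^2/(4*mR)\<bar> \<le> (Y1 \<omega> - Y2 \<omega>)^2 * \<bar>Y1 \<omega> + Y2 \<omega> - 2*mR\<bar> / (8*(a*k)^2)"
      unfolding DD_def using pD2[OF akpos, of "Y1 \<omega>" "Y2 \<omega>" mR] b1[OF w] b2[OF w] mR_bnd by auto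
  qed simp_all
  also have "\<dots> = (\<integral>\<omega>. (Y1 \<omega> - Y2 \<omega>)^2 * \<bar>Y1 \<omega> + Y2 \<omega> - 2*mR\<bar> \<partial>M) / (8*(a*k)^2)" by simp
  also have "\<dots> \<le> 4*(M4 + vR) / (8*(a*k)^2)" using cubic_bnd akpos by (intro divide_right_mono) auto
  also have "\<dots> = (M4 + vR)/(2*(a*k)^2)" using akpos by (simp add: divide_simps)
  finally show ?thesis .
qed

definition Dfun :: "real \<times> real \<Rightarrow> real" where "Dfun p = (fst p - snd p)^2 / (2*(fst p + snd p))"
lemma Dfun_meas[measurable]: "Dfun \<in> borel_measurable (borel \<Otimes>\<^sub>M borel)"
  unfolding Dfun_def by measurable
lemma DD_Dfun: "DD \<omega> = Dfun (Y1 \<omega>, Y2 \<omega>)" by (simp add: DD_def Dfun_def)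
lemma bnd_Dfun[simp]: "bnd (\<lambda>\<omega>. Dfun (Y1 \<omega>, Y2 \<omega>))" using bnd_DD by (simp add: DD_Dfun[abs_def])

lemma R_var: "\<bar>(\<integral>\<omega>. (Yo \<omega> - (\<integral>\<omega>. Yo \<omega> \<partial>M))^2 \<partial>M) - sig - vR/2\<bar> \<le> (M4 + vR)/(a*k) + M4/(a*k)^2"
proof -
  define K where "K = a*k"
  have K: "0 < K" using akpos by (simp add: K_def)
  define ED where "ED = (\<integral>\<omega>. DD \<omega> \<partial>M)"
  let ?P = "\<lambda>\<omega>. Y0 \<omega> - mu"
  let ?A = "\<lambda>\<omega>. (Y1 \<omega> + Y2 \<omega>)/2 - mR"
  let ?Z = "\<lambda>\<omega>. (Y1 \<omega> + Y2 \<omega>)/2 - mR - (Dfun (Y1 \<omega>, Y2 \<omega>) - ED)"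
  have "(\<integral>\<omega>. (Yo \<omega> - (\<integral>\<omega>. Yo \<omega> \<partial>M))^2 \<partial>M) = (\<integral>\<omega>. (?P \<omega>)^2 + 2 * (?P \<omega> * ?Z \<omega>) + (?Z \<omega>)^2 \<partial>M)"
  proof (rule Bochner_Integration.integral_cong)
    fix \<omega> assume w: "\<omega> \<in> space M"
    have "Yo \<omega> - (\<integral>\<omega>. Yo \<omega> \<partial>M) = ?P \<omega> + ?Z \<omega>"
      unfolding R_mean Yo_eq[OF w] ED_def DD_Dfun by simp
    then show "(Yo \<omega> - (\<integral>\<omega>. Yo \<omega> \<partial>M))^2 = (?P \<omega>)^2 + 2 * (?P \<omega> * ?Z \<omega>) + (?Z \<omega>)^2"
      by (simp only: binom2)
  qed simp
  also have "\<dots> = (\<integral>\<omega>. (?P \<omega>)^2 \<partial>M) + 2 * (\<integral>\<omega>. ?P \<omega> * ?Z \<omega> \<partial>M) + (\<integral>\<omega>. (?Z \<omega>)^2 \<partial>M)"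
    by simp
  also have "(\<integral>\<omega>. ?P \<omega> * ?Z \<omega> \<partial>M) = 0"
  proof -
    have "(\<integral>\<omega>. ?P \<omega> * ?Z \<omega> \<partial>M) = (\<integral>\<omega>. ?P \<omega> \<partial>M) * (\<integral>\<omega>. ?Z \<omega> \<partial>M)"
      using E0[where f="\<lambda>x. x - mu" and \<phi>="\<lambda>p. (fst p + snd p)/2 - mR - (Dfun p - ED)"] by simp
    also have "(\<integral>\<omega>. ?P \<omega> \<partial>M) = 0" by (simp add: mu_def prob_space)
    finally show ?thesis by simp
  qed
  also have "(\<integral>\<omega>. (?P \<omega>)^2 \<partial>M) = sig" by (simp add: sig_def)
  also have "(\<integral>\<omega>. (?Z \<omega>)^2 \<partial>M) = (\<integral>\<omega>. (?A \<omega>)^2 \<partial>M) - 2 * (\<integral>\<omega>. ?A \<omega> * (DD \<omega> - ED) \<partial>M) + (\<integral>\<omega>. (DD \<omega> - ED)^2 \<partial>M)"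
  proof -
    have "(\<integral>\<omega>. (?Z \<omega>)^2 \<partial>M) = (\<integral>\<omega>. (?A \<omega>)^2 - 2 * (?A \<omega> * (DD \<omega> - ED)) + (DD \<omega> - ED)^2 \<partial>M)"
      by (rule Bochner_Integration.integral_cong) (simp_all add: DD_Dfun power2_diff mult.assoc)
    then show ?thesis by simp
  qed
  also have "(\<integral>\<omega>. (?A \<omega>)^2 \<partial>M) = vR/2"
  proof -
    have "(\<integral>\<omega>. (?A \<omega>)^2 \<partial>M) = (\<integral>\<omega>. ((Y1 \<omega> - mR)^2 + 2*((Y1 \<omega> - mR)*(Y2 \<omega> - mR)) + (Y2 \<omega> - mR)^2)/4 \<partial>M)"
      by (rule Bochner_Integration.integral_cong) (simp_all add: power2_eq_square field_simps)
    also have "\<dots> = ((\<integral>\<omega>. (Y1 \<omega> - mR)^2 \<partial>M) + 2*(\<integral>\<omega>. (Y1 \<omega> - mR)*(Y2 \<omega> - mR) \<partial>M) + (\<integral>\<omega>. (Y2 \<omega> - mR)^2 \<partial>M))/4"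
      by simp
    also have "(\<integral>\<omega>. (Y1 \<omega> - mR)*(Y2 \<omega> - mR) \<partial>M) = 0"
      using E12[where f="\<lambda>y. y - mR" and g="\<lambda>z. z - mR"] W2_mean by simp
    finally show ?thesis using W2_pow[of 2] by (simp add: vR_def)
  qed
  also have "(\<integral>\<omega>. ?A \<omega> * (DD \<omega> - ED) \<partial>M) = (\<integral>\<omega>. ?A \<omega> * DD \<omega> \<partial>M)"
  proof -
    have "(\<integral>\<omega>. ?A \<omega> * (DD \<omega> - ED) \<partial>M) = (\<integral>\<omega>. ?A \<omega> * DD \<omega> - ED * ?A \<omega> \<partial>M)"
      by (rule Bochner_Integration.integral_cong) (auto simp: field_simps)
    also have "\<dots> = (\<integral>\<omega>. ?A \<omega> * DD \<omega> \<partial>M) - (\<integral>\<omega>. ED * ?A \<omega> \<partial>M)"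
      by (rule Bochner_Integration.integral_diff) simp_all
    also have "(\<integral>\<omega>. ED * ?A \<omega> \<partial>M) = ED * (\<integral>\<omega>. ?A \<omega> \<partial>M)"
      by (rule integral_mult_right_zero)
    also have "(\<integral>\<omega>. ?A \<omega> \<partial>M) = 0" using W2_mean W1_mean by (simp add: mR_def prob_space)
    finally show ?thesis by simp
  qed
  finally have Vo: "(\<integral>\<omega>. (Yo \<omega> - (\<integral>\<omega>. Yo \<omega> \<partial>M))^2 \<partial>M) = sig + vR/2 - 2 * (\<integral>\<omega>. ?A \<omega> * DD \<omega> \<partial>M) + (\<integral>\<omega>. (DD \<omega> - ED)^2 \<partial>M)"
    by simp
  have c1: "\<bar>\<integral>\<omega>. ?A \<omega> * DD \<omega> \<partial>M\<bar> \<le> (M4 + vR)/(2*K)"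
  proof -
    have "\<bar>\<integral>\<omega>. ?A \<omega> * DD \<omega> \<partial>M\<bar> \<le> (\<integral>\<omega>. \<bar>?A \<omega> * DD \<omega>\<bar> \<partial>M)"
      using E_abs[of "\<lambda>\<omega>. ?A \<omega> * DD \<omega>"] by simp
    also have "\<dots> \<le> (\<integral>\<omega>. (Y1 \<omega> - Y2 \<omega>)^2 * \<bar>Y1 \<omega> + Y2 \<omega> - 2*mR\<bar> / (8*K) \<partial>M)"
    proof (rule E_mono)
      fix \<omega> assume w: "\<omega> \<in> space M"
      have d: "0 \<le> DD \<omega>" "DD \<omega> \<le> (Y1 \<omega> - Y2 \<omega>)^2/(4*K)" using DD_bnd[OF w] by (auto simp: K_def)
      have eA: "(Y1 \<omega> + Y2 \<omega>)/2 - mR = (Y1 \<omega> + Y2 \<omega> - 2*mR)/2" by (simp add: field_simps)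
      have "\<bar>?A \<omega> * DD \<omega>\<bar> = \<bar>Y1 \<omega> + Y2 \<omega> - 2*mR\<bar>/2 * DD \<omega>" unfolding eA using d(1) by (simp add: abs_mult)
      also have "\<dots> \<le> \<bar>Y1 \<omega> + Y2 \<omega> - 2*mR\<bar>/2 * ((Y1 \<omega> - Y2 \<omega>)^2/(4*K))"
        using d by (intro mult_left_mono) auto
      also have "\<dots> = (Y1 \<omega> - Y2 \<omega>)^2 * \<bar>Y1 \<omega> + Y2 \<omega> - 2*mR\<bar> / (8*K)" by simp
      finally show "\<bar>?A \<omega> * DD \<omega>\<bar> \<le> (Y1 \<omega> - Y2 \<omega>)^2 * \<bar>Y1 \<omega> + Y2 \<omega> - 2*mR\<bar> / (8*K)" .
    qed simp_all
    also have "\<dots> = (\<integral>\<omega>. (Y1 \<omega> - Y2 \<omega>)^2 * \<bar>Y1 \<omega> + Y2 \<omega> - 2*mR\<bar> \<partial>M) / (8*K)" by simp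
    also have "\<dots> \<le> 4*(M4 + vR) / (8*K)" using cubic_bnd K by (intro divide_right_mono) auto
    also have "\<dots> = (M4 + vR)/(2*K)" using K by (simp add: divide_simps)
    finally show ?thesis .
  qed
  have c2: "0 \<le> (\<integral>\<omega>. (DD \<omega> - ED)^2 \<partial>M)" by (intro integral_nonneg_AE) auto
  have c3: "(\<integral>\<omega>. (DD \<omega> - ED)^2 \<partial>M) \<le> M4/K^2"
  proof -
    have "(\<integral>\<omega>. (DD \<omega> - ED)^2 \<partial>M) \<le> (\<integral>\<omega>. (DD \<omega>)^2 \<partial>M)"
      using var_le[of DD 0] by (simp add: ED_def)
    also have "\<dots> \<le> (\<integral>\<omega>. (Y1 \<omega> - Y2 \<omega>)^4 / (16*K^2) \<partial>M)"
    proof (rule E_mono)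
      fix \<omega> assume w: "\<omega> \<in> space M"
      have d: "0 \<le> DD \<omega>" "DD \<omega> \<le> (Y1 \<omega> - Y2 \<omega>)^2/(4*K)" using DD_bnd[OF w] by (auto simp: K_def)
      have "(DD \<omega>)^2 \<le> ((Y1 \<omega> - Y2 \<omega>)^2/(4*K))^2" using d by (intro power_mono) auto
      also have "\<dots> = (Y1 \<omega> - Y2 \<omega>)^4 / (16*K^2)" by (simp add: power_divide power_mult_distrib flip: power_mult)
      finally show "(DD \<omega>)^2 \<le> (Y1 \<omega> - Y2 \<omega>)^4 / (16*K^2)" .
    qed simp_all
    also have "\<dots> = (\<integral>\<omega>. (Y1 \<omega> - Y2 \<omega>)^4 \<partial>M) / (16*K^2)" by simp
    also have "\<dots> \<le> 16*M4 / (16*K^2)" using quart_bnd K by (intro divide_right_mono) auto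
    also have "\<dots> = M4/K^2" by simp
    finally show ?thesis .
  qed
  have "\<bar>(\<integral>\<omega>. (Yo \<omega> - (\<integral>\<omega>. Yo \<omega> \<partial>M))^2 \<partial>M) - sig - vR/2\<bar> \<le> 2 * ((M4 + vR)/(2*K)) + M4/K^2"
    unfolding Vo using c1 c2 c3 by linarith
  moreover have "2 * ((M4 + vR)/(2*K)) = (M4 + vR)/K" using K by (simp add: divide_simps)
  ultimately show ?thesis by (simp add: K_def)
qed

end

lemma inv_dist:
  fixes y c B :: real
  assumes "0 < y" "y \<le> B" "1/B \<le> c" "0 < B"
  shows "\<bar>y - 1/c\<bar> \<le> B^2 * \<bar>1/y - c\<bar>"
proof -
  have c: "0 < c" using assms by (smt (verit) divide_pos_pos)
  have ic: "1/c \<le> B" using assms c by (simp add: divide_simps mult.commute)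
  have "y - 1/c = y * (c - 1/y) / c" using assms c by (simp add: field_simps)
  then have "\<bar>y - 1/c\<bar> = y * \<bar>1/y - c\<bar> * (1/c)" using assms c by (simp add: abs_mult abs_minus_commute)
  also have "\<dots> \<le> B * \<bar>1/y - c\<bar> * B" using assms c ic by (intro mult_mono) auto
  finally show ?thesis by (simp add: power2_eq_square mult_ac)
qed

context lev begin

lemma T2: "vR \<le> (b*k)^4 * VQ"
proof -
  have B: "0 < b*k" using ab k1 by simp
  have "vR \<le> (\<integral>\<omega>. (Y1 \<omega> - 1/cQ)^2 \<partial>M)" unfolding vR_def mR_def by (rule var_le) simp
  also have "\<dots> \<le> (\<integral>\<omega>. (b*k)^4 * (1/Y1 \<omega> - cQ)^2 \<partial>M)"
  proof (rule E_mono)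
    fix \<omega> assume w: "\<omega> \<in> space M"
    have "\<bar>Y1 \<omega> - 1/cQ\<bar> \<le> (b*k)^2 * \<bar>1/Y1 \<omega> - cQ\<bar>"
      using inv_dist[of "Y1 \<omega>" "b*k" cQ] Y1pos[OF w] b1[OF w] cQ_bnd B by auto
    then have "\<bar>Y1 \<omega> - 1/cQ\<bar>^2 \<le> ((b*k)^2 * \<bar>1/Y1 \<omega> - cQ\<bar>)^2" by (intro power_mono) auto
    then show "(Y1 \<omega> - 1/cQ)^2 \<le> (b*k)^4 * (1/Y1 \<omega> - cQ)^2" by (simp add: power_mult_distrib flip: power_mult)
  qed simp_all
  also have "\<dots> = (b*k)^4 * VQ" by (simp add: VQ_def)
  finally show ?thesis .
qed

lemma T4: "M4 \<le> 16 * (b*k)^8 * FQ"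
proof -
  have B: "0 < b*k" using ab k1 by simp
  define r where "r = 1/cQ"
  have "M4 \<le> (\<integral>\<omega>. 8*((Y1 \<omega> - r)^4 + (mR - r)^4) \<partial>M)"
    unfolding M4_def
  proof (rule E_mono)
    fix \<omega>
    have e: "(Y1 \<omega> - r) - (mR - r) = Y1 \<omega> - mR" by simp
    show "(Y1 \<omega> - mR)^4 \<le> 8*((Y1 \<omega> - r)^4 + (mR - r)^4)" using pW4[of "Y1 \<omega> - r" "mR - r", unfolded e] .
  qed simp_all
  also have "\<dots> = 8 * (\<integral>\<omega>. (Y1 \<omega> - r)^4 \<partial>M) + 8 * (mR - r)^4" by (simp add: prob_space)
  also have "(mR - r)^4 \<le> (\<integral>\<omega>. (Y1 \<omega> - r)^4 \<partial>M)"
  proof -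
    have m: "mR - r = (\<integral>\<omega>. Y1 \<omega> - r \<partial>M)" by (simp add: mR_def prob_space)
    have "(mR - r)^2 \<le> (\<integral>\<omega>. (Y1 \<omega> - r)^2 \<partial>M)" unfolding m by (rule sq_le) simp
    then have "((mR - r)^2)^2 \<le> (\<integral>\<omega>. (Y1 \<omega> - r)^2 \<partial>M)^2" by (intro power_mono) auto
    also have "\<dots> \<le> (\<integral>\<omega>. ((Y1 \<omega> - r)^2)^2 \<partial>M)" by (rule sq_le) simp
    finally show ?thesis by (simp flip: power_mult)
  qed
  also have "8 * (\<integral>\<omega>. (Y1 \<omega> - r)^4 \<partial>M) + 8 * (\<integral>\<omega>. (Y1 \<omega> - r)^4 \<partial>M) \<le> 16 * (\<integral>\<omega>. (b*k)^8 * (1/Y1 \<omega> - cQ)^4 \<partial>M)"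
  proof -
    have "(\<integral>\<omega>. (Y1 \<omega> - r)^4 \<partial>M) \<le> (\<integral>\<omega>. (b*k)^8 * (1/Y1 \<omega> - cQ)^4 \<partial>M)"
    proof (rule E_mono)
      fix \<omega> assume w: "\<omega> \<in> space M"
      have "\<bar>Y1 \<omega> - 1/cQ\<bar> \<le> (b*k)^2 * \<bar>1/Y1 \<omega> - cQ\<bar>"
        using inv_dist[of "Y1 \<omega>" "b*k" cQ] Y1pos[OF w] b1[OF w] cQ_bnd B by auto
      then have "\<bar>Y1 \<omega> - 1/cQ\<bar>^4 \<le> ((b*k)^2 * \<bar>1/Y1 \<omega> - cQ\<bar>)^4" by (intro power_mono) auto
      then show "(Y1 \<omega> - r)^4 \<le> (b*k)^8 * (1/Y1 \<omega> - cQ)^4" by (simp add: r_def power_mult_distrib flip: power_mult)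
    qed simp_all
    then show ?thesis by simp
  qed
  also have "\<dots> = 16 * (b*k)^8 * FQ" by (simp add: FQ_def)
  finally show ?thesis by simp
qed

lemma bnd_divcY1[simp]: "bnd f \<Longrightarrow> bnd (\<lambda>\<omega>. f \<omega> / (c * Y1 \<omega>))"
  using bnd_divY1[of "\<lambda>\<omega>. f \<omega> / c"] by (simp add: divide_divide_eq_left)

lemma Cbound: "0 \<le> cQ - 1/mR \<and> cQ - 1/mR \<le> vR/(a*k)^3"
proof -
  have m: "a*k \<le> mR" using mR_bnd by simp
  have mp: "0 < mR" using m akpos by simp
  have pt: "1/Y1 \<omega> = 1/mR - (Y1 \<omega> - mR)/mR^2 + (Y1 \<omega> - mR)^2/(mR^2 * Y1 \<omega>)" if w: "\<omega> \<in> space M" for \<omega>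
    using Y1pos[OF w] mp by (simp add: field_simps power2_eq_square)
  have "cQ = (\<integral>\<omega>. 1/mR - (Y1 \<omega> - mR)/mR^2 + (Y1 \<omega> - mR)^2/(mR^2 * Y1 \<omega>) \<partial>M)"
    unfolding cQ_def by (rule Bochner_Integration.integral_cong) (simp_all add: pt)
  also have "\<dots> = 1/mR - (\<integral>\<omega>. Y1 \<omega> - mR \<partial>M)/mR^2 + (\<integral>\<omega>. (Y1 \<omega> - mR)^2/mR^2 / Y1 \<omega> \<partial>M)"
    by (simp add: prob_space)
  finally have e: "cQ - 1/mR = (\<integral>\<omega>. (Y1 \<omega> - mR)^2/mR^2 / Y1 \<omega> \<partial>M)" using W1_mean by simp
  have lo: "0 \<le> (\<integral>\<omega>. (Y1 \<omega> - mR)^2/mR^2 / Y1 \<omega> \<partial>M)"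
    by (intro integral_nonneg_AE AE_I2) (auto dest: Y1pos)
  have "(\<integral>\<omega>. (Y1 \<omega> - mR)^2/mR^2 / Y1 \<omega> \<partial>M) \<le> (\<integral>\<omega>. (Y1 \<omega> - mR)^2/(a*k)^3 \<partial>M)"
  proof (rule E_mono)
    fix \<omega> assume w: "\<omega> \<in> space M"
    have y: "a*k \<le> Y1 \<omega>" using b1[OF w] by simp
    have "(a*k)^3 \<le> mR^2 * Y1 \<omega>"
    proof -
      have "(a*k)^2 * (a*k) \<le> mR^2 * Y1 \<omega>" using m y akpos by (intro mult_mono power_mono) auto
      then show ?thesis by (simp add: power2_eq_square power3_eq_cube)
    qed
    then have "(Y1 \<omega> - mR)^2/(mR^2 * Y1 \<omega>) \<le> (Y1 \<omega> - mR)^2/(a*k)^3"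
      using akpos Y1pos[OF w] mp by (intro divide_left_mono mult_pos_pos) auto
    then show "(Y1 \<omega> - mR)^2/mR^2 / Y1 \<omega> \<le> (Y1 \<omega> - mR)^2/(a*k)^3" by simp
  qed simp_all
  also have "\<dots> = vR/(a*k)^3" by (simp add: vR_def)
  finally show ?thesis using e lo by simp
qed

end

lemma sqrt_step: "1 \<le> (n::real) \<Longrightarrow> 1/(n * sqrt n) \<le> 6*(1/sqrt n - 1/sqrt (1+n))"
proof -
  assume n: "1 \<le> n"
  define s where "s = sqrt n"
  define t where "t = sqrt (1+n)"
  have s2: "s^2 = n" using n by (simp add: s_def)
  have t2: "t^2 = n+1" using n by (simp add: t_def add.commute)
  have s1: "1 \<le> s" using n by (simp add: s_def)
  have st: "s < t" using n by (simp add: s_def t_def)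
  have tp: "0 < t" using st s1 by simp
  have "t*(t+s) \<le> 6* s^2*(t - s)*(t+s)"
  proof -
    have "(t - s)*(t+s) = 1" using s2 t2 by (simp add: algebra_simps power2_eq_square)
    then have r: "6* s^2*(t - s)*(t+s) = 6* s^2" by (simp add: mult.assoc)
    have "t*(t+s) \<le> t*(t+t)" using st tp by (intro mult_left_mono) auto
    also have "\<dots> = 2*(n+1)" using t2 by (simp add: power2_eq_square)
    also have "\<dots> \<le> 6* s^2" using s2 n by simp
    finally have "t*(t+s) \<le> 6* s^2" .
    then show ?thesis using r by linarith
  qed
  then have "t \<le> 6* s^2*(t-s)" using st s1 by (simp add: mult_le_cancel_right_pos add_pos_pos)
  then have "1/(s^2* s) \<le> 6*(t-s)/(s*t)"
    using s1 tp st by (simp add: divide_simps power2_eq_square) (simp add: algebra_simps)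
  moreover have "6*(t-s)/(s*t) = 6*(1/s - 1/t)" using s1 tp by (simp add: field_simps)
  ultimately show ?thesis using s2 by (simp add: s_def t_def)
qed

lemma sum_bound:
  fixes d :: "nat \<Rightarrow> real"
  assumes "\<And>k. 1 \<le> k \<Longrightarrow> \<bar>d (Suc k) - d k\<bar> \<le> E/(real k * sqrt (real k))" "d 1 = 0" "0 \<le> E"
  shows "1 \<le> n \<Longrightarrow> \<bar>d n\<bar> \<le> E*(6 - 6/sqrt (real n))"
proof (induction n rule: nat_induct_at_least)
  case base then show ?case using assms by simp
next
  case (Suc n)
  have "\<bar>d (Suc n)\<bar> \<le> \<bar>d n\<bar> + E/(real n * sqrt (real n))" using assms(1)[OF Suc.hyps] by linarith
  also have "\<dots> \<le> E*(6 - 6/sqrt (real n)) + E*(6*(1/sqrt n - 1/sqrt (1+real n)))"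
  proof -
    have "E*(1/(real n * sqrt (real n))) \<le> E*(6*(1/sqrt n - 1/sqrt (1+real n)))"
      using mult_left_mono[OF sqrt_step[of "real n"] assms(3)] Suc.hyps by simp
    then show ?thesis using Suc.IH by (simp add: ac_simps)
  qed
  also have "\<dots> = E*(6 - 6/sqrt (real (Suc n)))" by (simp add: algebra_simps add.commute)
  finally show ?case .
qed

lemma sqrt_growth:
  fixes s :: "nat \<Rightarrow> real"
  assumes "\<And>k. 1 \<le> k \<Longrightarrow> s (Suc k) \<le> s k + C/real k" "s 1 \<le> 0" "0 \<le> C"
  shows "1 \<le> n \<Longrightarrow> s n \<le> 4*C * sqrt (real n)"
proof (induction n rule: nat_induct_at_least)
  case base then show ?case using assms by simp
next
  case (Suc n)
  have n: "1 \<le> real n" using Suc.hyps by simp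
  have "1/real n \<le> 4*(sqrt (n+1) - sqrt n)"
  proof -
    have q: "(sqrt (n+1) - sqrt n)*(sqrt (n+1) + sqrt n) = 1"
      by (simp add: algebra_simps)
    have sl: "sqrt x \<le> x" if "1 \<le> x" for x :: real
    proof -
      have "1 \<le> sqrt x" using that by simp
      then have "sqrt x * 1 \<le> sqrt x * sqrt x" by (intro mult_left_mono) auto
      then show ?thesis using that by simp
    qed
    have "sqrt n \<le> n" using n by (rule sl)
    moreover have "sqrt (n+1) \<le> n+1" using n by (intro sl) simp
    ultimately have "sqrt (n+1) + sqrt n \<le> 4*n" using n by linarith
    then have "(sqrt (n+1) - sqrt n)*(sqrt (n+1) + sqrt n) \<le> (sqrt (n+1) - sqrt n)*(4*n)"
      by (intro mult_left_mono) auto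
    then have "1 \<le> 4*n*(sqrt (n+1) - sqrt n)" using q by (simp add: mult_ac)
    then show ?thesis using n by (simp add: divide_simps mult_ac)
  qed
  then have "C/real n \<le> 4*C*(sqrt (n+1) - sqrt n)" using assms(3)
    using mult_left_mono[of "1/real n" "4*(sqrt (n+1) - sqrt n)" C] by (simp add: mult_ac)
  then show ?case using assms(1)[OF Suc.hyps] Suc.IH by (simp add: algebra_simps add.commute)
qed

lemma rec_bound:
  fixes lam C D :: real and p :: nat
  assumes "0 \<le> lam" "lam < 1" "0 \<le> C" "0 \<le> D"
  shows "\<exists>K. \<forall>u::nat \<Rightarrow> real. (\<forall>k\<ge>1. u (Suc k) \<le> lam * u k + C / real k ^ p) \<longrightarrow>
      (\<forall>k\<ge>1. u k \<le> D) \<longrightarrow> (\<forall>k\<ge>1. u k \<le> K / real k ^ p)"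
proof -
  define th where "th = 2/(1+lam)"
  have th1: "1 < th" using assms by (simp add: th_def)
  have lt: "lam * th < 1" using assms by (simp add: th_def field_simps)
  have "(\<lambda>k. (1 + 1/real k)^p) \<longlonglongrightarrow> (1 + 0)^p"
    by (intro tendsto_intros lim_inverse_n')
  then have "eventually (\<lambda>k. (1 + 1/real k)^p < th) sequentially"
    using th1 by (intro order_tendstoD) auto
  then obtain N where N: "\<And>k. N \<le> k \<Longrightarrow> (1 + 1/real k)^p < th" by (auto simp: eventually_sequentially)
  define k0 where "k0 = max N 1"
  define K where "K = max (D * real k0 ^ p) (C*th/(1 - lam*th))"
  have Kge: "C*th \<le> K*(1 - lam*th)"
  proof -
    have "C*th/(1-lam*th) \<le> K" by (simp add: K_def)
    then show ?thesis using lt by (simp add: pos_divide_le_eq)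
  qed
  have K0: "D * real k0 ^ p \<le> K" by (simp add: K_def)
  show ?thesis
  proof (rule exI[of _ K], rule allI, rule impI, rule impI)
    fix u :: "nat \<Rightarrow> real"
    assume rec: "\<forall>k\<ge>1. u (Suc k) \<le> lam * u k + C / real k ^ p" and Db: "\<forall>k\<ge>1. u k \<le> D"
    show "\<forall>k\<ge>1. u k \<le> K / real k ^ p"
    proof (intro allI impI)
      fix n :: nat assume "1 \<le> n"
      then show "u n \<le> K / real n ^ p"
      proof (induction n rule: nat_induct_at_least)
        case base
        have "1 \<le> real k0 ^ p" using k0_def by simp
        then have "D \<le> D * real k0 ^ p" using assms(4) by (simp add: mult_le_cancel_left1)
        moreover have "u 1 \<le> D" using Db by simp
        ultimately show ?case using K0 by simp
      next
        case (Suc k)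
        show ?case
        proof (cases "Suc k \<le> k0")
          case True
          have "real (Suc k) ^ p \<le> real k0 ^ p" using True by (intro power_mono) auto
          then have "D * real (Suc k) ^ p \<le> K" using K0 assms(4) by (meson mult_left_mono order_trans)
          then have "D \<le> K / real (Suc k) ^ p" by (simp add: divide_simps mult_ac del: of_nat_Suc)
          then show ?thesis using Db by (meson Suc.hyps le_SucI order_trans)
        next
          case False
          then have kN: "N \<le> k" by (simp add: k0_def)
          have kp: "0 < real k" using Suc.hyps by simp
          have "u (Suc k) \<le> lam * (K / real k ^ p) + C / real k ^ p"
            using rec Suc.hyps Suc.IH assms(1) by (meson add_mono_thms_linordered_semiring(3) mult_left_mono order_trans)
          also have "\<dots> = (lam*K + C) / real k ^ p" by (simp add: add_divide_distrib)
          also have "\<dots> \<le> (lam*K + C) * th / real (Suc k) ^ p"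
          proof -
            have "(1 + 1/real k)^p = (real (Suc k)/real k)^p" using kp by (simp add: field_simps)
            then have q: "real (Suc k)^p / real k^p < th" using N[OF kN] by (simp add: power_divide)
            have nn: "0 \<le> lam*K + C" using assms K0 Db
              by (smt (verit, best) K_def mult_nonneg_nonneg th1 zero_le_power le_max_iff_disj divide_nonneg_nonneg of_nat_0_le_iff lt)
            have "(lam*K + C) / real k ^ p = (lam*K + C) * (real (Suc k)^p / real k^p) / real (Suc k) ^ p"
              using kp by (simp add: field_simps del: of_nat_Suc)
            also have "\<dots> \<le> (lam*K + C) * th / real (Suc k) ^ p"
              using q nn by (intro divide_right_mono mult_left_mono) auto
            finally show ?thesis .
          qed
          also have "\<dots> \<le> K / real (Suc k) ^ p"
          proof -
            have "(lam*K + C) * th \<le> K" using Kge by (simp add: algebra_simps)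
            then show ?thesis by (intro divide_right_mono) auto
          qed
          finally show ?thesis .
        qed
      qed
    qed
  qed
qed

locale tree = prob_space +
  fixes X :: "bool list \<Rightarrow> 'a \<Rightarrow> real" and a b :: real
  assumes ind: "indep_vars (\<lambda>_. borel) X UNIV"
    and iid: "\<And>w. distr M borel (X w) = distr M borel (X [])"
    and bnds: "\<And>w \<omega>. \<omega> \<in> space M \<Longrightarrow> a \<le> X w \<omega> \<and> X w \<omega> \<le> b"
    and ab: "0 < a" "a < b"
begin

lemma mX[measurable]: "X u \<in> borel_measurable M" using ind unfolding indep_vars_def by auto
lemma mRs[measurable]: "Rs X k w \<in> borel_measurable M" by (rule meas_Rs) simp

lemma law_eq: "(f::real\<Rightarrow>real) \<in> borel_measurable borel \<Longrightarrow> (\<integral>\<omega>. f (Rs X k w \<omega>) \<partial>M) = (\<integral>\<omega>. f (Rs X k [] \<omega>) \<partial>M)"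
  using integral_distr[OF mRs[of k w], of f] integral_distr[OF mRs[of k "[]"], of f]
    law_Rs_aux[OF ind iid, of k w "[]"] by simp

lemma lev_inst: "1 \<le> k \<Longrightarrow> lev M (X []) (Rs X k [False]) (Rs X k [True]) a b k"
proof (unfold_locales)
  fix \<phi> :: "real \<times> real \<Rightarrow> real" assume "\<phi> \<in> borel_measurable (borel \<Otimes>\<^sub>M borel)"
  then show "indep_var borel (X []) borel (\<lambda>\<omega>. \<phi> (Rs X k [False] \<omega>, Rs X k [True] \<omega>))"
    using indep_level1[OF ind, of \<phi> "[]" k] by simp
next
  show "indep_var borel (Rs X k [False]) borel (Rs X k [True])"
    using indep_level2[OF ind, of k "[]"] by simp
next
  show "distr M borel (Rs X k [False]) = distr M borel (Rs X k [True])" by (rule law_Rs_aux[OF ind iid])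
next
  fix \<omega> assume "\<omega> \<in> space M"
  then have "\<And>u. a \<le> X u \<omega> \<and> X u \<omega> \<le> b" using bnds by blast
  then show "a * real k \<le> Rs X k [False] \<omega> \<and> Rs X k [False] \<omega> \<le> b * real k"
    and "a * real k \<le> Rs X k [True] \<omega> \<and> Rs X k [True] \<omega> \<le> b * real k"
    using Rs_bnd[where a=a and X=X and \<omega>=\<omega> and b=b and k=k] ab by auto
qed (use ab bnds in auto)

definition "mk k = (\<integral>\<omega>. Rs X k [] \<omega> \<partial>M)"
definition "vk k = (\<integral>\<omega>. (Rs X k [] \<omega> - mk k)^2 \<partial>M)"
definition "M4k k = (\<integral>\<omega>. (Rs X k [] \<omega> - mk k)^4 \<partial>M)"
definition "cq k = (\<integral>\<omega>. 1 / Rs X k [] \<omega> \<partial>M)"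
definition "VQk k = (\<integral>\<omega>. (1 / Rs X k [] \<omega> - cq k)^2 \<partial>M)"
definition "FQk k = (\<integral>\<omega>. (1 / Rs X k [] \<omega> - cq k)^4 \<partial>M)"
definition "mu = (\<integral>\<omega>. X [] \<omega> \<partial>M)"
definition "sig = (\<integral>\<omega>. (X [] \<omega> - mu)^2 \<partial>M)"

lemma level:
  assumes k: "1 \<le> k"
  shows "VQk (Suc k) \<le> 3/4 * VQk k + 3 * ((b - a) / (a * k)^2)^2"
    and "FQk (Suc k) \<le> FQk k / 3 + (VQk k)^2 + 65*b^4*(VQk k)^4 + 729*((b - a) / (a * k)^2)^4"
    and "vk k \<le> (b*k)^4 * VQk k"
    and "M4k k \<le> 16*(b*k)^8 * FQk k"
    and "mk (Suc k) = mu + mk k - (\<integral>\<omega>. (Rs X k [False] \<omega> - Rs X k [True] \<omega>)^2 / (2*(Rs X k [False] \<omega> + Rs X k [True] \<omega>)) \<partial>M)"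
    and "0 \<le> (\<integral>\<omega>. (Rs X k [False] \<omega> - Rs X k [True] \<omega>)^2 / (2*(Rs X k [False] \<omega> + Rs X k [True] \<omega>)) \<partial>M)"
    and "(\<integral>\<omega>. (Rs X k [False] \<omega> - Rs X k [True] \<omega>)^2 / (2*(Rs X k [False] \<omega> + Rs X k [True] \<omega>)) \<partial>M) \<le> vk k / (2*(a*k))"
    and "\<bar>(\<integral>\<omega>. (Rs X k [False] \<omega> - Rs X k [True] \<omega>)^2 / (2*(Rs X k [False] \<omega> + Rs X k [True] \<omega>)) \<partial>M) - vk k / (2 * mk k)\<bar> \<le> (M4k k + vk k)/(2*(a*k)^2)"
    and "\<bar>vk (Suc k) - sig - vk k / 2\<bar> \<le> (M4k k + vk k)/(a*k) + M4k k/(a*k)^2"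
    and "0 \<le> cq k - 1 / mk k \<and> cq k - 1 / mk k \<le> vk k / (a*k)^3"
    and "a*k \<le> mk k \<and> mk k \<le> b*k"
    and "VQk k \<le> 1/a^2" and "FQk k \<le> 1/a^4"
    and "0 \<le> VQk k" and "0 \<le> FQk k" and "0 \<le> vk k" and "0 \<le> M4k k"
proof -
  interpret L: lev M "X []" "Rs X k [False]" "Rs X k [True]" a b k by (rule lev_inst[OF k])
  have Yo: "L.Yo = Rs X (Suc k) []" by (auto simp: fun_eq_iff L.Yo_def Rs_Suc)
  have cQ: "L.cQ = cq k" unfolding L.cQ_def cq_def by (rule law_eq) measurable
  have VQ: "L.VQ = VQk k" unfolding L.VQ_def VQk_def cQ by (rule law_eq) measurable
  have FQ: "L.FQ = FQk k" unfolding L.FQ_def FQk_def cQ by (rule law_eq) measurable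
  have mR: "L.mR = mk k" unfolding L.mR_def mk_def by (rule law_eq) measurable
  have vR: "L.vR = vk k" unfolding L.vR_def vk_def mR by (rule law_eq) measurable
  have M4: "L.M4 = M4k k" unfolding L.M4_def M4k_def mR by (rule law_eq) measurable
  have cq1: "cq (Suc k) = (\<integral>\<omega>. 1 / L.Yo \<omega> \<partial>M)" by (simp add: cq_def Yo)
  have mk1: "mk (Suc k) = (\<integral>\<omega>. L.Yo \<omega> \<partial>M)" by (simp add: mk_def Yo)
  have mu: "L.mu = mu" by (simp add: L.mu_def mu_def)
  have sig: "L.sig = sig" by (simp add: L.sig_def sig_def mu L.mu_def[symmetric])
  show "VQk (Suc k) \<le> 3/4 * VQk k + 3 * ((b - a) / (a * k)^2)^2"
    using L.Q_var unfolding VQ by (simp add: VQk_def[of "Suc k"] cq_def[of "Suc k"] Yo L.eQ_def)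
  show "FQk (Suc k) \<le> FQk k / 3 + (VQk k)^2 + 65*b^4*(VQk k)^4 + 729*((b - a) / (a * k)^2)^4"
    using L.Q_4 unfolding VQ FQ by (simp add: FQk_def[of "Suc k"] cq_def[of "Suc k"] Yo L.eQ_def)
  show "vk k \<le> (b*k)^4 * VQk k" using L.T2 by (simp add: vR VQ)
  show "M4k k \<le> 16*(b*k)^8 * FQk k" using L.T4 by (simp add: M4 FQ)
  show "mk (Suc k) = mu + mk k - (\<integral>\<omega>. (Rs X k [False] \<omega> - Rs X k [True] \<omega>)^2 / (2*(Rs X k [False] \<omega> + Rs X k [True] \<omega>)) \<partial>M)"
    using L.R_mean unfolding mk1 mu mR by (simp add: L.DD_def[abs_def])
  show "0 \<le> (\<integral>\<omega>. (Rs X k [False] \<omega> - Rs X k [True] \<omega>)^2 / (2*(Rs X k [False] \<omega> + Rs X k [True] \<omega>)) \<partial>M)"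
    using L.ED_bnd by (simp add: L.DD_def[abs_def])
  show "(\<integral>\<omega>. (Rs X k [False] \<omega> - Rs X k [True] \<omega>)^2 / (2*(Rs X k [False] \<omega> + Rs X k [True] \<omega>)) \<partial>M) \<le> vk k / (2*(a*k))"
    using L.ED_bnd by (simp add: L.DD_def[abs_def] vR)
  show "\<bar>(\<integral>\<omega>. (Rs X k [False] \<omega> - Rs X k [True] \<omega>)^2 / (2*(Rs X k [False] \<omega> + Rs X k [True] \<omega>)) \<partial>M) - vk k / (2 * mk k)\<bar> \<le> (M4k k + vk k)/(2*(a*k)^2)"
    using L.ED_approx by (simp add: L.DD_def[abs_def] vR mR M4)
  show "\<bar>vk (Suc k) - sig - vk k / 2\<bar> \<le> (M4k k + vk k)/(a*k) + M4k k/(a*k)^2"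
    using L.R_var unfolding vR M4 sig by (simp add: vk_def[of "Suc k"] mk_def[of "Suc k"] Yo)
  show "0 \<le> cq k - 1 / mk k \<and> cq k - 1 / mk k \<le> vk k / (a*k)^3"
    using L.Cbound by (simp add: cQ mR vR)
  show "a*k \<le> mk k \<and> mk k \<le> b*k" using L.mR_bnd by (simp add: mR)
  show "0 \<le> VQk k" using L.VQ_nonneg by (simp add: VQ)
  show "0 \<le> FQk k" using L.FQ_nonneg by (simp add: FQ)
  show "0 \<le> vk k" using L.vR_nonneg by (simp add: vR)
  show "0 \<le> M4k k" using L.M4_nonneg by (simp add: M4)
  have ib: "\<bar>1 / Rs X k [False] \<omega> - cq k\<bar> \<le> 1/a" if w: "\<omega> \<in> space M" for \<omega>
  proof -
    have h1: "1/(b*k) \<le> 1 / Rs X k [False] \<omega>" "1 / Rs X k [False] \<omega> \<le> 1/(a*k)" using L.inv_bnd[OF w] by auto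
    have h2: "1/(b*k) \<le> cq k" "cq k \<le> 1/(a*k)" using L.cQ_bnd by (auto simp: cQ)
    have h3: "0 \<le> 1/(b*k)" using ab k by simp
    have h4: "1/(a*k) \<le> 1/a" using ab k by (simp add: divide_simps)
    show ?thesis unfolding abs_le_iff using h1 h2 h3 h4 by (intro conjI) linarith+
  qed
  have "L.VQ \<le> (\<integral>\<omega>. (1/a)^2 \<partial>M)" unfolding L.VQ_def cQ
  proof (rule L.E_mono)
    fix \<omega> assume w: "\<omega> \<in> space M"
    have "\<bar>1 / Rs X k [False] \<omega> - cq k\<bar>^2 \<le> (1/a)^2" using ib[OF w] by (intro power_mono) auto
    then show "(1 / Rs X k [False] \<omega> - cq k)^2 \<le> (1/a)^2" by simp
  qed simp_all
  then show "VQk k \<le> 1/a^2" by (simp add: VQ prob_space power_divide)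
  have "L.FQ \<le> (\<integral>\<omega>. (1/a)^4 \<partial>M)" unfolding L.FQ_def cQ
  proof (rule L.E_mono)
    fix \<omega> assume w: "\<omega> \<in> space M"
    have "\<bar>1 / Rs X k [False] \<omega> - cq k\<bar>^4 \<le> (1/a)^4" using ib[OF w] by (intro power_mono) auto
    then show "(1 / Rs X k [False] \<omega> - cq k)^4 \<le> (1/a)^4" by simp
  qed simp_all
  then show "FQk k \<le> 1/a^4" by (simp add: FQ prob_space power_divide)
qed

end

lemma harm0: "harm 0 = (0::real)" by (simp add: harm_def)

lemma harm_ln: "1 \<le> n \<Longrightarrow> \<bar>harm (n - 1) - ln (real n)\<bar> \<le> (1::real)"
proof -
  assume n: "1 \<le> n"
  have lo: "ln (real n) \<le> harm (n - 1)"
    using ln_le_harm[of "n - 1"] n by (simp add: of_nat_diff)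
  have up: "harm (n - 1) \<le> 1 + ln (real n)"
  proof (cases "n = 1")
    case True then show ?thesis by (simp add: harm_def)
  next
    case False
    then obtain j where j: "n - 1 = Suc j" using n by (cases "n - 1") auto
    have "harm (Suc j) - ln (real (Suc j)) \<le> harm (Suc 0) - ln (real (Suc 0))"
      using decseq_harm_diff_ln[unfolded decseq_def, rule_format, of 0 j] by simp
    then have "harm (n - 1) \<le> 1 + ln (real (n - 1))" using j by (simp add: harm_Suc harm0)
    moreover have "ln (real (n - 1)) \<le> ln (real n)" using j by simp
    ultimately show ?thesis by simp
  qed
  show ?thesis using lo up by simp
qed

definition RB :: "real \<Rightarrow> real \<Rightarrow> real \<Rightarrow> nat \<Rightarrow> real" where
  "RB lam C D p = (SOME K. \<forall>u::nat \<Rightarrow> real. (\<forall>k\<ge>1. u (Suc k) \<le> lam * u k + C / real k ^ p) \<longrightarrow>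
      (\<forall>k\<ge>1. u k \<le> D) \<longrightarrow> (\<forall>k\<ge>1. u k \<le> K / real k ^ p))"

lemma rec_some:
  assumes "0 \<le> lam" "lam < 1" "0 \<le> C" "0 \<le> D"
    and "\<And>k. 1 \<le> k \<Longrightarrow> u (Suc k) \<le> lam * u k + C / real k ^ p" "\<And>k. 1 \<le> k \<Longrightarrow> u k \<le> D" "1 \<le> k"
  shows "u k \<le> RB lam C D p / real k ^ p"
proof -
  have "\<forall>u::nat \<Rightarrow> real. (\<forall>k\<ge>1. u (Suc k) \<le> lam * u k + C / real k ^ p) \<longrightarrow>
      (\<forall>k\<ge>1. u k \<le> D) \<longrightarrow> (\<forall>k\<ge>1. u k \<le> RB lam C D p / real k ^ p)"
    unfolding RB_def by (rule someI_ex[OF rec_bound[OF assms(1-4)]])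
  then show ?thesis using assms(5-7) by blast
qed

lemma Cfinal:
  fixes n m mu sig cq L M1 B2 a b :: real
  assumes n: "1 \<le> n" and mu: "a \<le> mu" "mu \<le> b" and a: "0 < a" and sg: "0 \<le> sig" "sig \<le> (b-a)^2"
    and m: "a*n \<le> m" and th: "\<bar>m - mu*n + sig/mu*L\<bar> \<le> M1"
    and L: "0 \<le> L" "L \<le> n" "L^2 \<le> 4*n"
    and c: "0 \<le> cq - 1/m" "cq - 1/m \<le> B2/(a^3*n^2)"
  shows "\<bar>cq - 1/(mu*n) - sig*L/(mu^3*n^2)\<bar> \<le> (B2/a^3 + (4*((b-a)^2/a)^2 + (b-a)^2/a*M1)/a^3 + M1/a^2) / n^2"
proof -
  define S where "S = sig/mu"
  define th where "th = m - mu*n + S*L"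
  have mup: "0 < mu" using mu a by simp
  have np: "0 < n" using n by simp
  have mp: "0 < m" using m a np by (smt (verit) mult_pos_pos)
  have S0: "0 \<le> S" using sg mup by (simp add: S_def)
  have S1: "S \<le> (b-a)^2/a" unfolding S_def using sg mu a mup
    by (meson divide_left_mono dual_order.trans mult_pos_pos order.refl zero_le_power2 frac_le)
  have thb: "\<bar>th\<bar> \<le> M1" using th by (simp add: th_def S_def)
  have M1: "0 \<le> M1" using thb by simp
  have key: "1/m - 1/(mu*n) - S*L/(mu^2*n^2) = S*L*(S*L - th)/(m*mu^2*n^2) - th/(m*mu*n)"
  proof -
    have "mu*n - m = S*L - th" by (simp add: th_def)
    have "1/m - 1/(mu*n) = (mu*n - m)/(m*mu*n)" using mp mup np by (simp add: field_simps)
    also have "\<dots> = (S*L - th)/(m*mu*n)" by (simp add: th_def)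
    finally have e1: "1/m - 1/(mu*n) = (S*L - th)/(m*mu*n)" .
    have "(S*L - th)/(m*mu*n) - S*L/(mu^2*n^2) = S*L*(mu*n - m)/(m*mu^2*n^2) - th/(m*mu*n)"
      using mp mup np by (simp add: field_simps power2_eq_square)
    also have "mu*n - m = S*L - th" by (simp add: th_def)
    finally show ?thesis using e1 by simp
  qed
  have e2: "sig*L/(mu^3*n^2) = S*L/(mu^2*n^2)" using mup by (simp add: S_def field_simps power2_eq_square power3_eq_cube)
  have b1: "\<bar>S*L*(S*L - th)/(m*mu^2*n^2)\<bar> \<le> (4*((b-a)^2/a)^2 + (b-a)^2/a*M1)/(a^3*n^2)"
  proof -
    have num1: "\<bar>S*L*(S*L - th)\<bar> \<le> S*L*(S*L + M1)"
    proof -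
      have LS: "0 \<le> S*L" using S0 L by simp
      have t1: "th \<le> M1" "- th \<le> M1" using thb by auto
      have "\<bar>S*L - th\<bar> \<le> S*L + M1" unfolding abs_le_iff using LS t1 by (intro conjI) linarith+
      then have "S*L*\<bar>S*L - th\<bar> \<le> S*L*(S*L + M1)" using LS by (intro mult_left_mono) auto
      then show ?thesis using LS S0 L by (simp add: abs_mult)
    qed
    have num2: "S*L*(S*L + M1) \<le> (4*((b-a)^2/a)^2 + (b-a)^2/a*M1) * n"
    proof -
      have "S*L*(S*L + M1) = S^2*L^2 + S*L*M1" by (simp add: algebra_simps power2_eq_square)
      also have "\<dots> \<le> ((b-a)^2/a)^2*(4*n) + (b-a)^2/a*n*M1"
        using S0 S1 L M1 a np by (intro add_mono mult_mono power_mono) auto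
      finally show ?thesis by (simp add: algebra_simps)
    qed
    have num: "\<bar>S*L*(S*L - th)\<bar> \<le> (4*((b-a)^2/a)^2 + (b-a)^2/a*M1) * n" using num1 num2 by linarith
    have den: "a^3*n^3 \<le> m*mu^2*n^2"
    proof -
      have "(a*n)*(a^2*n^2) \<le> m*(mu^2*n^2)" using m mu a np mp by (intro mult_mono) (auto intro!: power_mono)
      then show ?thesis by (simp add: algebra_simps power2_eq_square power3_eq_cube)
    qed
    have "\<bar>S*L*(S*L - th)/(m*mu^2*n^2)\<bar> = \<bar>S*L*(S*L - th)\<bar>/(m*mu^2*n^2)" using mp mup np by (simp add: abs_divide)
    also have "\<dots> \<le> (4*((b-a)^2/a)^2 + (b-a)^2/a*M1) * n/(a^3*n^3)"
      using num den a np by (intro frac_le) auto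
    also have "\<dots> = (4*((b-a)^2/a)^2 + (b-a)^2/a*M1)/(a^3*n^2)" using np by (simp add: power2_eq_square power3_eq_cube)
    finally show ?thesis .
  qed
  have b2: "\<bar>th/(m*mu*n)\<bar> \<le> M1/(a^2*n^2)"
  proof -
    have den: "a^2*n^2 \<le> m*mu*n"
    proof -
      have "(a*n)*(a*n) \<le> m*(mu*n)" using m mu a np mp by (intro mult_mono) auto
      then show ?thesis by (simp add: algebra_simps power2_eq_square)
    qed
    have "\<bar>th/(m*mu*n)\<bar> = \<bar>th\<bar>/(m*mu*n)" using mp mup np by (simp add: abs_divide)
    also have "\<dots> \<le> M1/(a^2*n^2)" using thb den a np by (intro frac_le) auto
    finally show ?thesis .
  qed
  have eq: "cq - 1/(mu*n) - sig*L/(mu^3*n^2) = (cq - 1/m) + (S*L*(S*L - th)/(m*mu^2*n^2) - th/(m*mu*n))"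
    unfolding e2 key[symmetric] by simp
  have "\<bar>cq - 1/(mu*n) - sig*L/(mu^3*n^2)\<bar> \<le> \<bar>cq - 1/m\<bar> + (\<bar>S*L*(S*L - th)/(m*mu^2*n^2)\<bar> + \<bar>th/(m*mu*n)\<bar>)"
    unfolding eq by (rule order_trans[OF abs_triangle_ineq add_left_mono[OF abs_triangle_ineq4]])
  also have "\<dots> \<le> B2/(a^3*n^2) + ((4*((b-a)^2/a)^2 + (b-a)^2/a*M1)/(a^3*n^2) + M1/(a^2*n^2))"
    using c b1 b2 by (intro add_mono) auto
  also have "\<dots> = (B2/a^3 + (4*((b-a)^2/a)^2 + (b-a)^2/a*M1)/a^3 + M1/a^2) / n^2"
    by (simp add: add_divide_distrib divide_divide_eq_left)
  finally show ?thesis .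
qed

lemma sqrt_le_self: "1 \<le> x \<Longrightarrow> sqrt x \<le> (x::real)"
proof -
  assume x: "1 \<le> x"
  have "1 \<le> sqrt x" using x by simp
  then have "sqrt x * 1 \<le> sqrt x * sqrt x" by (intro mult_left_mono) auto
  then show ?thesis using x by simp
qed

lemma err_bound:
  fixes dl v m sg mu s k a b B2 B4 K5 Cs :: real
  assumes k: "1 \<le> k" and a: "0 < a" and m: "a*k \<le> m" and mu: "a \<le> mu"
    and sg: "0 \<le> sg" "sg \<le> (b-a)^2"
    and e1: "\<bar>dl - v/(2*m)\<bar> \<le> (B4+B2)/(2*(a*k)^2)"
    and e2: "\<bar>v - 2 * sg\<bar> \<le> K5/k"
    and s: "0 \<le> s" "s \<le> 4*Cs * sqrt k" and ms: "m = mu*k - s"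
    and nn: "0 \<le> B4 + B2" "0 \<le> K5" "0 \<le> Cs"
  shows "\<bar>dl - sg/mu/k\<bar> \<le> ((B4+B2)/(2*a^2) + K5/(2*a) + 4*(b-a)^2*Cs/a^2) / (k * sqrt k)"
proof -
  have kp: "0 < k" using k by simp
  have mp: "0 < m" using m a kp by (smt (verit) mult_pos_pos)
  have mup: "0 < mu" using mu a by simp
  have sk: "sqrt k \<le> k" using k by (rule sqrt_le_self)
  have skp: "0 < sqrt k" using kp by simp
  have split: "dl - sg/mu/k = (dl - v/(2*m)) + (v - 2 * sg)/(2*m) + sg * s/(m*mu*k)"
  proof -
    have s_eq: "s = mu*k - m" using ms by simp
    show ?thesis unfolding s_eq using mp mup kp by (simp add: field_simps)
  qed
  have t1: "\<bar>dl - v/(2*m)\<bar> \<le> (B4+B2)/(2*a^2) / (k * sqrt k)"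
  proof -
    have "(B4+B2)/(2*(a*k)^2) = (B4+B2)/(2*a^2) / (k*k)" by (simp add: power2_eq_square mult_ac)
    also have "\<dots> \<le> (B4+B2)/(2*a^2) / (k * sqrt k)"
    proof (rule divide_left_mono)
      show "k * sqrt k \<le> k * k" using sk kp by (intro mult_left_mono) auto
      show "0 \<le> (B4+B2)/(2*a^2)" using nn by simp
      show "0 < k * k * (k * sqrt k)" using kp skp by simp
    qed
    finally show ?thesis using e1 by simp
  qed
  have t2: "\<bar>(v - 2 * sg)/(2*m)\<bar> \<le> K5/(2*a) / (k * sqrt k)"
  proof -
    have K5: "0 \<le> K5" using nn by simp
    have "\<bar>(v - 2 * sg)/(2*m)\<bar> = \<bar>v - 2 * sg\<bar>/(2*m)" using mp by (simp add: abs_divide)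
    also have "\<dots> \<le> (K5/k)/(2*(a*k))" using e2 m mp a kp K5 by (intro frac_le) auto
    also have "\<dots> = K5/(2*a) / (k*k)" by (simp add: mult_ac)
    also have "\<dots> \<le> K5/(2*a) / (k * sqrt k)" using sk kp skp K5 a
      by (intro divide_left_mono mult_left_mono mult_pos_pos) auto
    finally show ?thesis .
  qed
  have t3: "\<bar>sg * s/(m*mu*k)\<bar> \<le> 4*(b-a)^2*Cs/a^2 / (k * sqrt k)"
  proof -
    have Cs: "0 \<le> Cs" using nn by simp
    have "\<bar>sg * s/(m*mu*k)\<bar> = sg * s/(m*mu*k)" using sg s mp mup kp by simp
    also have "\<dots> \<le> ((b-a)^2*(4*Cs * sqrt k))/((a*k)*a*k)"
      using sg s m mu mp mup kp a Cs by (intro frac_le mult_mono mult_pos_pos) auto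
    also have "\<dots> = 4*(b-a)^2*Cs/a^2 / (k * sqrt k)"
    proof -
      define r where "r = sqrt k"
      have kr: "k = r*r" using kp by (simp add: r_def)
      have rp: "0 < r" using skp by (simp add: r_def)
      show ?thesis unfolding r_def[symmetric] kr using rp a by (simp add: field_simps power2_eq_square)
    qed
    finally show ?thesis .
  qed
  have "\<bar>dl - sg/mu/k\<bar> \<le> \<bar>dl - v/(2*m)\<bar> + \<bar>(v - 2 * sg)/(2*m)\<bar> + \<bar>sg * s/(m*mu*k)\<bar>"
    unfolding split by (rule order_trans[OF abs_triangle_ineq add_right_mono[OF abs_triangle_ineq]])
  also have "\<dots> \<le> (B4+B2)/(2*a^2) / (k * sqrt k) + K5/(2*a) / (k * sqrt k) + 4*(b-a)^2*Cs/a^2 / (k * sqrt k)"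
    using t1 t2 t3 by (intro add_mono)
  finally show ?thesis by (simp add: add_divide_distrib)
qed

definition "C2c a b = 3*(b-a)^2/a^4"
definition "K2c a b = RB (3/4) (C2c a b) (1/a^2) 4"
definition "C4c a b = (K2c a b)^2 + 65*b^4*(K2c a b)^4 + 729*(b-a)^4/a^8"
definition "K4c a b = RB (1/3) (C4c a b) (1/a^4) 8"
definition "B2c a b = b^4 * K2c a b"
definition "B4c a b = 16*b^8 * K4c a b"
definition "C5c a b = (B4c a b + B2c a b)/a + B4c a b/a^2"
definition "K5c a b = RB (1/2) (C5c a b) (B2c a b + 2*(b-a)^2) 1"
definition "Csc a b = B2c a b / (2*a)"
definition "Ec a b = (B4c a b + B2c a b)/(2*a^2) + K5c a b/(2*a) + 4*(b-a)^2*Csc a b/a^2"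
definition "M1c a b = 6 * Ec a b + (b-a)^2/a"
definition "M2c a b = B2c a b/a^3 + (4*((b-a)^2/a)^2 + (b-a)^2/a*M1c a b)/a^3 + M1c a b/a^2"

context tree begin

lemma basics: "a \<le> mu \<and> mu \<le> b" "0 \<le> sig \<and> sig \<le> (b-a)^2" "mk 1 = mu" "vk 1 = sig"
proof -
  interpret L: lev M "X []" "Rs X 1 [False]" "Rs X 1 [True]" a b 1 by (rule lev_inst) simp
  show mu: "a \<le> mu \<and> mu \<le> b" unfolding mu_def by (rule L.E_bounds) (auto dest: L.b0)
  show "0 \<le> sig \<and> sig \<le> (b-a)^2" unfolding sig_def
  proof (rule L.E_bounds)
    fix \<omega> assume w: "\<omega> \<in> space M"
    have "\<bar>X [] \<omega> - mu\<bar> \<le> b - a" using L.b0[OF w] mu by (auto simp: abs_le_iff)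
    then have "\<bar>X [] \<omega> - mu\<bar>^2 \<le> (b-a)^2" by (intro power_mono) auto
    then show "0 \<le> (X [] \<omega> - mu)^2 \<and> (X [] \<omega> - mu)^2 \<le> (b-a)^2" by simp
  qed simp
  have r1: "Rs X 1 [] = X []" by (rule ext) (simp only: One_nat_def Rs_1)
  show "mk 1 = mu" unfolding mk_def mu_def r1 ..
  show "vk 1 = sig" unfolding vk_def mk_def sig_def mu_def r1 ..
qed

lemma main:
  assumes n: "2 \<le> n"
  shows "\<bar>mk n - mu * real n + sig / mu * ln (real n)\<bar> \<le> M1c a b"
    and "\<bar>cq n - 1 / (mu * real n) - sig * ln (real n) / (mu ^ 3 * (real n)\<^sup>2)\<bar> \<le> M2c a b / (real n)\<^sup>2"
proof -
  have a: "0 < a" and ab': "a \<le> b" using ab by auto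
  note L = level
  have VQ: "VQk k \<le> K2c a b / real k ^ 4" if "1 \<le> k" for k
    unfolding K2c_def
  proof (rule rec_some[where u=VQk])
    fix k :: nat assume k: "1 \<le> k"
    have "3 * ((b - a) / (a * k)^2)^2 = C2c a b / real k ^ 4"
      by (simp add: C2c_def power_divide power_mult_distrib flip: power_mult)
    then show "VQk (Suc k) \<le> 3/4 * VQk k + C2c a b / real k ^ 4" using L(1)[OF k] by simp
  next
    fix k :: nat assume k: "1 \<le> k" then show "VQk k \<le> 1/a^2" using L(12)[OF k] by simp
  qed (use that a in \<open>auto simp: C2c_def\<close>)
  have K2: "0 \<le> K2c a b" using VQ[of 1] L(14)[of 1] by simp
  have FQ: "FQk k \<le> K4c a b / real k ^ 8" if "1 \<le> k" for k
    unfolding K4c_def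
  proof (rule rec_some[where u=FQk])
    fix k :: nat assume k: "1 \<le> k"
    have kp: "0 < real k" using k by simp
    have v0: "0 \<le> VQk k" using L(14)[OF k] .
    have v1: "VQk k \<le> K2c a b / real k ^ 4" using VQ[OF k] .
    have "(VQk k)^2 \<le> (K2c a b / real k ^ 4)^2" using v0 v1 by (intro power_mono) auto
    also have "\<dots> = (K2c a b)^2 / real k ^ 8" by (simp add: power_divide flip: power_mult)
    finally have q2: "(VQk k)^2 \<le> (K2c a b)^2 / real k ^ 8" .
    have "(VQk k)^4 \<le> (K2c a b / real k ^ 4)^4" using v0 v1 by (intro power_mono) auto
    also have "\<dots> = (K2c a b)^4 / real k ^ 16" by (simp add: power_divide flip: power_mult)
    also have "\<dots> \<le> (K2c a b)^4 / real k ^ 8" using k K2 by (intro divide_left_mono power_increasing) auto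
    finally have q4: "(VQk k)^4 \<le> (K2c a b)^4 / real k ^ 8" .
    have e4: "729*((b - a) / (a * k)^2)^4 = (729*(b-a)^4/a^8) / real k ^ 8"
      by (simp add: power_divide power_mult_distrib flip: power_mult)
    have "FQk (Suc k) \<le> FQk k / 3 + (VQk k)^2 + 65*b^4*(VQk k)^4 + 729*((b - a) / (a * k)^2)^4" using L(2)[OF k] .
    also have "\<dots> \<le> FQk k / 3 + (K2c a b)^2 / real k ^ 8 + 65*b^4*((K2c a b)^4 / real k ^ 8) + (729*(b-a)^4/a^8) / real k ^ 8"
      unfolding e4 using q2 q4 ab' a by (intro add_mono mult_left_mono) auto
    also have "\<dots> = 1/3 * FQk k + C4c a b / real k ^ 8" by (simp add: C4c_def add_divide_distrib)
    finally show "FQk (Suc k) \<le> 1/3 * FQk k + C4c a b / real k ^ 8" .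
  next
    fix k :: nat assume k: "1 \<le> k" then show "FQk k \<le> 1/a^4" using L(13)[OF k] by simp
  qed (use that a K2 in \<open>auto simp: C4c_def\<close>)
  have K4: "0 \<le> K4c a b" using FQ[of 1] L(15)[of 1] by simp
  have vB: "vk k \<le> B2c a b" if k: "1 \<le> k" for k
  proof -
    have kp: "0 < real k" using k by simp
    have "vk k \<le> (b*k)^4 * VQk k" using L(3)[OF k] .
    also have "\<dots> \<le> (b*k)^4 * (K2c a b / real k ^ 4)" using VQ[OF k] by (intro mult_left_mono) auto
    also have "\<dots> = B2c a b" using kp by (simp add: B2c_def power_mult_distrib)
    finally show ?thesis .
  qed
  have MB: "M4k k \<le> B4c a b" if k: "1 \<le> k" for k
  proof -
    have kp: "0 < real k" using k by simp
    have "M4k k \<le> 16*(b*k)^8 * FQk k" using L(4)[OF k] .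
    also have "\<dots> \<le> 16*(b*k)^8 * (K4c a b / real k ^ 8)" using FQ[OF k] by (intro mult_left_mono) auto
    also have "\<dots> = B4c a b" using kp by (simp add: B4c_def power_mult_distrib)
    finally show ?thesis .
  qed
  have B2: "0 \<le> B2c a b" using vB[of 1] L(16)[of 1] by simp
  have B4: "0 \<le> B4c a b" using MB[of 1] L(17)[of 1] by simp
  have sg: "0 \<le> sig" "sig \<le> (b-a)^2" and mu: "a \<le> mu" "mu \<le> b" using basics by auto
  have VV: "\<bar>vk k - 2 * sig\<bar> \<le> K5c a b / real k ^ 1" if "1 \<le> k" for k
    unfolding K5c_def
  proof (rule rec_some[where u="\<lambda>k. \<bar>vk k - 2 * sig\<bar>"])
    fix k :: nat assume k: "1 \<le> k"
    have kp: "1 \<le> real k" using k by simp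
    have "(M4k k + vk k)/(a*k) + M4k k/(a*k)^2 \<le> (B4c a b + B2c a b)/(a*k) + B4c a b/(a*k)^2"
      using MB[OF k] vB[OF k] L(17)[OF k] a kp by (intro add_mono divide_right_mono) auto
    also have "\<dots> \<le> (B4c a b + B2c a b)/(a*k) + B4c a b/(a^2*k)"
    proof -
      have "a^2 * k \<le> (a*k)^2" using a kp by (simp add: power2_eq_square mult_left_mono)
      then show ?thesis using B4 a kp by (intro add_left_mono divide_left_mono) auto
    qed
    also have "\<dots> = C5c a b / real k ^ 1" by (simp add: C5c_def add_divide_distrib)
    finally have e: "(M4k k + vk k)/(a*k) + M4k k/(a*k)^2 \<le> C5c a b / real k ^ 1" .
    have "\<bar>vk (Suc k) - 2 * sig\<bar> \<le> \<bar>vk k / 2 - sig\<bar> + \<bar>vk (Suc k) - sig - vk k / 2\<bar>" by simp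
    also have "\<dots> \<le> 1/2 * \<bar>vk k - 2 * sig\<bar> + C5c a b / real k ^ 1"
    proof -
      have eq: "vk k / 2 - sig = (vk k - 2 * sig)/2" by simp
      have "\<bar>vk k / 2 - sig\<bar> = \<bar>vk k - 2 * sig\<bar>/2" unfolding eq by (simp only: abs_divide abs_numeral)
      then show ?thesis using L(9)[OF k] e by linarith
    qed
    finally show "\<bar>vk (Suc k) - 2 * sig\<bar> \<le> 1/2 * \<bar>vk k - 2 * sig\<bar> + C5c a b / real k ^ 1" .
  next
    fix k :: nat assume k: "1 \<le> k"
    then show "\<bar>vk k - 2 * sig\<bar> \<le> B2c a b + 2*(b-a)^2" using vB[OF k] L(16)[OF k] sg by (simp add: abs_le_iff)
  qed (use that a B2 B4 in \<open>auto simp: C5c_def\<close>)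
  have K5: "0 \<le> K5c a b"
  proof -
    have "\<bar>vk 1 - 2 * sig\<bar> \<le> K5c a b" using VV[of 1] by simp
    then show ?thesis by (rule order_trans[OF abs_ge_zero])
  qed
  define dl where "dl k = mk k + mu - mk (Suc k)" for k
  have dl0: "0 \<le> dl k" and dl1: "dl k \<le> Csc a b / real k"
    and dl2: "\<bar>dl k - vk k / (2 * mk k)\<bar> \<le> (B4c a b + B2c a b)/(2*(a*k)^2)" if k: "1 \<le> k" for k
  proof -
    have e: "dl k = (\<integral>\<omega>. (Rs X k [False] \<omega> - Rs X k [True] \<omega>)^2 / (2*(Rs X k [False] \<omega> + Rs X k [True] \<omega>)) \<partial>M)"
      using L(5)[OF k] by (simp add: dl_def)
    show "0 \<le> dl k" using L(6)[OF k] e by simp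
    have kp: "0 < real k" using k by simp
    have "dl k \<le> vk k / (2*(a*k))" using L(7)[OF k] e by simp
    also have "\<dots> \<le> B2c a b / (2*(a*k))" using vB[OF k] a kp by (intro divide_right_mono) auto
    also have "\<dots> = Csc a b / real k" by (simp add: Csc_def)
    finally show "dl k \<le> Csc a b / real k" .
    have "\<bar>dl k - vk k / (2 * mk k)\<bar> \<le> (M4k k + vk k)/(2*(a*k)^2)" using L(8)[OF k] e by simp
    also have "\<dots> \<le> (B4c a b + B2c a b)/(2*(a*k)^2)" using vB[OF k] MB[OF k] a kp
      by (intro divide_right_mono add_mono) auto
    finally show "\<bar>dl k - vk k / (2 * mk k)\<bar> \<le> (B4c a b + B2c a b)/(2*(a*k)^2)" .
  qed
  have Cs: "0 \<le> Csc a b" using B2 a by (simp add: Csc_def)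
  define s where "s k = mu * real k - mk k" for k
  have s1: "s 1 = 0" using basics by (simp add: s_def)
  have sS: "s (Suc k) = s k + dl k" for k by (simp add: s_def dl_def algebra_simps)
  have s0: "0 \<le> s k" if "1 \<le> k" for k
    using that
  proof (induction k rule: nat_induct_at_least)
    case base then show ?case using s1 by simp
  next
    case (Suc k) then show ?case using sS[of k] dl0[of k] by simp
  qed
  have sq: "s k \<le> 4 * Csc a b * sqrt (real k)" if "1 \<le> k" for k
    by (rule sqrt_growth[OF _ _ Cs that]) (use sS dl1 s1 in auto)
  define d where "d k = s k - sig / mu * harm (k - 1)" for k
  have dstep: "\<bar>d (Suc k) - d k\<bar> \<le> Ec a b / (real k * sqrt (real k))" if k: "1 \<le> k" for k
  proof -
    have h: "harm k = harm (k - 1) + 1 / real k"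
    proof -
      obtain j where j: "k = Suc j" using k by (cases k) auto
      show ?thesis by (simp add: j harm_Suc inverse_eq_divide)
    qed
    have "d (Suc k) - d k = dl k - sig / mu / real k" by (simp add: d_def sS h algebra_simps)
    moreover have "\<bar>dl k - sig / mu / real k\<bar> \<le> ((B4c a b + B2c a b)/(2*a^2) + K5c a b/(2*a) + 4*(b-a)^2*Csc a b/a^2) / (real k * sqrt (real k))"
    proof (rule err_bound[where v="vk k" and m="mk k" and s="s k"])
      show "1 \<le> real k" using k by simp
      show "a * real k \<le> mk k" using L(11)[OF k] by simp
      show "\<bar>vk k - 2 * sig\<bar> \<le> K5c a b / real k" using VV[OF k] by simp
      show "s k \<le> 4 * Csc a b * sqrt (real k)" by (rule sq[OF k])
      show "mk k = mu * real k - s k" by (simp add: s_def)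
    qed (use a mu sg dl2[OF k] s0[OF k] B2 B4 K5 Cs in auto)
    ultimately show ?thesis by (simp add: Ec_def)
  qed
  have E0: "0 \<le> Ec a b" using B2 B4 K5 Cs a by (simp add: Ec_def)
  have dn: "\<bar>d n\<bar> \<le> Ec a b * (6 - 6 / sqrt (real n))"
    by (rule sum_bound[OF dstep _ E0]) (use n s1 in \<open>auto simp: d_def harm0\<close>)
  have dn6: "\<bar>d n\<bar> \<le> 6 * Ec a b"
  proof -
    have "Ec a b * (6 - 6 / sqrt (real n)) \<le> Ec a b * 6" using E0 by (intro mult_left_mono) auto
    then show ?thesis using dn by simp
  qed
  have hl: "\<bar>harm (n - 1) - ln (real n)\<bar> \<le> (1::real)" using n by (intro harm_ln) simp
  have smu: "0 \<le> sig / mu" "sig / mu \<le> (b-a)^2/a" using sg mu a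
    by (auto intro!: frac_le)
  have eqm: "mk n - mu * real n + sig / mu * ln (real n) = - d n - sig / mu * (harm (n - 1) - ln (real n))"
    by (simp add: d_def s_def algebra_simps)
  have "\<bar>- d n - sig / mu * (harm (n - 1) - ln (real n))\<bar> \<le> \<bar>d n\<bar> + sig / mu * \<bar>harm (n - 1) - ln (real n)\<bar>"
  proof -
    have t: "\<bar>- d n - sig / mu * (harm (n - 1) - ln (real n))\<bar> \<le> \<bar>- d n\<bar> + \<bar>sig / mu * (harm (n - 1) - ln (real n))\<bar>"
      by (rule abs_triangle_ineq4)
    have "\<bar>sig / mu * (harm (n - 1) - ln (real n))\<bar> = sig / mu * \<bar>harm (n - 1) - ln (real n)\<bar>"
      using smu(1) by (simp only: abs_mult abs_of_nonneg)
    then show ?thesis using t by simp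
  qed
  also have "\<dots> \<le> 6 * Ec a b + (b-a)^2/a * 1"
    using dn6 hl smu by (intro add_mono mult_mono) auto
  finally show M1: "\<bar>mk n - mu * real n + sig / mu * ln (real n)\<bar> \<le> M1c a b"
    unfolding eqm by (simp add: M1c_def)
  have n1: "1 \<le> real n" and np: "0 < real n" using n by auto
  have ln0: "0 \<le> ln (real n)" using n1 by simp
  have lnn: "ln (real n) \<le> real n" using ln_le_minus_one[OF np] by simp
  have ln2: "(ln (real n))^2 \<le> 4 * real n"
  proof -
    have "ln (real n) = 2 * ln (sqrt (real n))" using np by (simp add: ln_sqrt)
    also have "\<dots> \<le> 2 * sqrt (real n)" using ln_le_minus_one[of "sqrt (real n)"] np by simp
    finally have "(ln (real n))^2 \<le> (2 * sqrt (real n))^2" using ln0 by (intro power_mono) auto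
    then show ?thesis using np by (simp add: power_mult_distrib)
  qed
  have k1: "1 \<le> n" using n by simp
  have cqb: "0 \<le> cq n - 1 / mk n" "cq n - 1 / mk n \<le> B2c a b / (a^3 * (real n)^2)"
  proof -
    show "0 \<le> cq n - 1 / mk n" using L(10)[OF k1] by simp
    have "cq n - 1 / mk n \<le> vk n / (a * real n)^3" using L(10)[OF k1] by simp
    also have "\<dots> \<le> B2c a b / (a * real n)^3" using vB[OF k1] a np by (intro divide_right_mono) auto
    also have "\<dots> \<le> B2c a b / (a^3 * (real n)^2)"
    proof (rule divide_left_mono)
      have "(real n)^2 * 1 \<le> (real n)^2 * real n" using n1 by (intro mult_left_mono) auto
      then show "a^3 * (real n)^2 \<le> (a * real n)^3" using a by (simp add: power_mult_distrib power2_eq_square power3_eq_cube mult_left_mono)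
    qed (use B2 a np in auto)
    finally show "cq n - 1 / mk n \<le> B2c a b / (a^3 * (real n)^2)" .
  qed
  show "\<bar>cq n - 1 / (mu * real n) - sig * ln (real n) / (mu ^ 3 * (real n)\<^sup>2)\<bar> \<le> M2c a b / (real n)\<^sup>2"
    unfolding M2c_def
    by (rule Cfinal[OF n1 mu a sg _ M1 ln0 lnn ln2 cqb]) (use L(11)[OF k1] in simp)
qed

end

theorem theorem5:
  fixes a b :: real
  assumes "0 < a" and "a < b"
  shows "\<exists>M1 M2 :: real. \<forall>(M :: 'a measure) (X :: bool list \<Rightarrow> 'a \<Rightarrow> real).
    (prob_space M \<and> prob_space.indep_vars M (\<lambda>_. borel) X UNIV
     \<and> (\<forall>w. distr M borel (X w) = distr M borel (X []))
     \<and> (\<forall>w. \<forall>\<omega>\<in>space M. a \<le> X w \<omega> \<and> X w \<omega> \<le> b))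
    \<longrightarrow> (\<forall>n::nat. n \<ge> 2 \<longrightarrow>
      (let \<mu> = integral\<^sup>L M (X []);
           \<sigma>2 = integral\<^sup>L M (\<lambda>\<omega>. (X [] \<omega> - \<mu>)\<^sup>2)
       in \<bar>integral\<^sup>L M (Rn X n) - \<mu> * real n + \<sigma>2 / \<mu> * ln (real n)\<bar> \<le> M1
        \<and> \<bar>integral\<^sup>L M (Cn X n) - 1 / (\<mu> * real n)
             - \<sigma>2 * ln (real n) / (\<mu> ^ 3 * (real n)\<^sup>2)\<bar> \<le> M2 / (real n)\<^sup>2))"
proof -
  show ?thesis
  proof (rule exI[of _ "M1c a b"], rule exI[of _ "M2c a b"], rule allI, rule allI, rule impI)
    fix M :: "'a measure" and X :: "bool list \<Rightarrow> 'a \<Rightarrow> real"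
    assume H: "prob_space M \<and> prob_space.indep_vars M (\<lambda>_. borel) X UNIV
     \<and> (\<forall>w. distr M borel (X w) = distr M borel (X []))
     \<and> (\<forall>w. \<forall>\<omega>\<in>space M. a \<le> X w \<omega> \<and> X w \<omega> \<le> b)"
    then interpret prob_space M by blast
    interpret T: tree M X a b
      by (unfold_locales) (use H assms in auto)
    show "\<forall>n::nat. n \<ge> 2 \<longrightarrow>
      (let \<mu> = integral\<^sup>L M (X []);
           \<sigma>2 = integral\<^sup>L M (\<lambda>\<omega>. (X [] \<omega> - \<mu>)\<^sup>2)
       in \<bar>integral\<^sup>L M (Rn X n) - \<mu> * real n + \<sigma>2 / \<mu> * ln (real n)\<bar> \<le> M1c a b
        \<and> \<bar>integral\<^sup>L M (Cn X n) - 1 / (\<mu> * real n)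
             - \<sigma>2 * ln (real n) / (\<mu> ^ 3 * (real n)\<^sup>2)\<bar> \<le> M2c a b / (real n)\<^sup>2)"
    proof (intro allI impI)
      fix n :: nat assume n: "2 \<le> n"
      have e1: "integral\<^sup>L M (Rn X n) = T.mk n" by (simp add: T.mk_def Rn_Rs[abs_def])
      have e2: "integral\<^sup>L M (Cn X n) = T.cq n" by (simp add: T.cq_def Cn_def[abs_def] Rn_Rs[abs_def])
      have e3: "integral\<^sup>L M (X []) = T.mu" by (simp add: T.mu_def)
      have e4: "integral\<^sup>L M (\<lambda>\<omega>. (X [] \<omega> - T.mu)\<^sup>2) = T.sig" by (simp add: T.sig_def)
      show "let \<mu> = integral\<^sup>L M (X []);
           \<sigma>2 = integral\<^sup>L M (\<lambda>\<omega>. (X [] \<omega> - \<mu>)\<^sup>2)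
       in \<bar>integral\<^sup>L M (Rn X n) - \<mu> * real n + \<sigma>2 / \<mu> * ln (real n)\<bar> \<le> M1c a b
        \<and> \<bar>integral\<^sup>L M (Cn X n) - 1 / (\<mu> * real n)
             - \<sigma>2 * ln (real n) / (\<mu> ^ 3 * (real n)\<^sup>2)\<bar> \<le> M2c a b / (real n)\<^sup>2"
        unfolding Let_def e1 e2 e3 e4 using T.main[OF n] by blast
    qed
  qed
qed

end
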